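(* Let $p$ be an odd prime, $\alpha$ an indeterminate over $\mathbb F_p$, and for $\gamma\in\mathbb F_p(\alpha)$ let \[ G^{(\gamma)}(X)=-\sum_{k=1}^{p-1}\frac{1}{k}\,\frac{X^{k}}{\prod_{s=1}^{k-1}b_{1,s}(\gamma)} \] (empty product equal to $1$). Then for every integer $h$ with $0<h<p$, \[ G^{(h\alpha)}\!\left(\frac{X^h}{\prod_{s=1}^{h-1}b_{1,s}(\alpha)}\right)\equiv h\,G^{(\alpha)}(X)\pmod{X^p-L_{p-1}^{(\alpha^p)}(\alpha^p-\alpha)} \] in the polynomial ring $\mathbb F_p(\alpha)[X]$, where $L_{p-1}^{(\alpha^p)}(\alpha^p-\alpha)$ is obtained from $L_{p-1}^{(\alpha)}(X)$ by substituting $\alpha^p$ for $\alpha$ and $\alpha^p-\alpha$ for $X$.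
   Context: $\mathbb F_p$ is the field of $p$ elements, $\binom{x}{m}=x(x-1)\cdots(x-m+1)/m!$. $L_{p-1}^{(\alpha)}(X)=\sum_{k=0}^{p-1}\binom{\alpha-1}{p-1-k}\frac{(-X)^k}{k!}\in\mathbb F_p[\alpha,X]$. For integers $0<r,s<p$ (interpreted as elements of $\mathbb F_p$), $b_{r,s}(\alpha)=\sum_{k=0}^{p-1}(-r/s)^k\binom{r\alpha-1}{p-1-k}\binom{s\alpha-1}{k}\in\mathbb F_p[\alpha]$, and $b_{1,s}(h\alpha)$ denotes substitution of $h\alpha$ for $\alpha$. *)

theory Defs
  imports "Berlekamp_Zassenhaus.Finite_Field" "HOL-Computational_Algebra.Fraction_Field"
          "HOL-Computational_Algebra.Polynomial"
begin

text \<open>F_p is the type 'p mod_ring (p = CARD('p), a prime), F_p[alpha] is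
 'p mod_ring poly and F_p(alpha) is its fraction field 'p mod_ring poly fract.\<close>

type_synonym 'p ratfun = "'p mod_ring poly fract"

definition alpha :: "'p::prime_card ratfun" where
  "alpha = to_fract [:0, 1:]"

text \<open>Binomial coefficient binom(x, m) = x(x-1)...(x-m+1)/m! in a field
 (used only for m < p, where m! is invertible).\<close>
definition fbinom :: "'a::field \<Rightarrow> nat \<Rightarrow> 'a" where
  "fbinom x m = (\<Prod>i<m. x - of_nat i) / of_nat (fact m)"

text \<open>b_{r,s}(gamma) = sum_{k=0}^{p-1} (-r/s)^k binom(r gamma - 1, p-1-k) binom(s gamma - 1, k),
 evaluated at an element gamma of F_p(alpha) (i.e. the polynomial b_{r,s} with gamma substituted).\<close>
definition b_rs :: "nat \<Rightarrow> nat \<Rightarrow> 'p::prime_card ratfun \<Rightarrow> 'p ratfun" where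
  "b_rs r s \<gamma> = (let p = CARD('p) in
     \<Sum>k\<le>p-1. (- (of_nat r / of_nat s)) ^ k * fbinom (of_nat r * \<gamma> - 1) (p - 1 - k)
                 * fbinom (of_nat s * \<gamma> - 1) k)"

definition laguerre :: "'p::prime_card ratfun \<Rightarrow> 'p ratfun \<Rightarrow> 'p ratfun" where
  "laguerre a x = (let p = CARD('p) in
     \<Sum>k\<le>p-1. fbinom (a - 1) (p - 1 - k) * (- x) ^ k / of_nat (fact k))"

definition G_poly :: "'p::prime_card ratfun \<Rightarrow> 'p ratfun poly" where
  "G_poly \<gamma> = - (\<Sum>k=1..CARD('p)-1.
      monom (1 / (of_nat k * (\<Prod>s=1..k-1. b_rs 1 s \<gamma>))) k)"

end

theory Submission imports Defs "HOL-Computational_Algebra.Formal_Power_Series" begin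

lemma char_of_nat_pow:
  assumes "prime CHAR('a::comm_ring_1)"
  shows "(of_nat i :: 'a) ^ CHAR('a) = of_nat i"
proof (induction i)
  case 0 then show ?case using assms by (simp add: prime_gt_0_nat power_0_left)
next
  case (Suc i)
  have "(of_nat (Suc i) :: 'a) ^ CHAR('a) = (of_nat i + 1) ^ CHAR('a)" by (simp add: add.commute)
  also have "\<dots> = of_nat i ^ CHAR('a) + 1 ^ CHAR('a)"
    by (rule freshmans_dream[OF assms refl])
  finally show ?case using Suc by simp
qed

lemma char_of_nat_nz:
  assumes "0 < i" "i < CHAR('a::comm_ring_1)"
  shows "(of_nat i :: 'a) \<noteq> 0"
  using assms by (auto simp: of_nat_eq_0_iff_char_dvd dest: dvd_imp_le)

lemma char_of_nat_inj:
  assumes "i < CHAR('a::comm_ring_1)" "j < CHAR('a)" "(of_nat i :: 'a) = of_nat j"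
  shows "i = j"
proof (rule ccontr)
  assume "i \<noteq> j"
  then consider "i < j" | "j < i" by linarith
  then show False
  proof cases
    case 1 then have "CHAR('a) dvd (j - i)" using assms of_nat_eq_iff_char_dvd[of i j] by auto
    then show False using 1 assms by (auto dest: dvd_imp_le)
  next
    case 2 then have "CHAR('a) dvd (i - j)" using assms of_nat_eq_iff_char_dvd[of j i] by auto
    then show False using 2 assms by (auto dest: dvd_imp_le)
  qed
qed

lemma char_of_nat_mod: "(of_nat (n mod CHAR('a)) :: 'a::comm_ring_1) = of_nat n"
  by (metis of_nat_mod_CHAR)

lemma power_diff_dvd: "(x - y :: 'a::comm_ring_1) dvd x ^ n - y ^ n"
proof (induction n)
  case (Suc n)
  have "x ^ Suc n - y ^ Suc n = x * (x ^ n - y ^ n) + (x - y) * y ^ n"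
    by (simp add: algebra_simps)
  then show ?case using Suc by (simp add: dvd_add)
qed simp

lemma roots_prod_dvd:
  fixes q :: "'a::idom poly"
  assumes "finite S" "inj_on r S" "\<forall>i\<in>S. poly q (r i) = 0"
  shows "(\<Prod>i\<in>S. [:- r i, 1:]) dvd q"
  using assms
proof (induction S arbitrary: q rule: finite_induct)
  case empty then show ?case by simp
next
  case (insert a S)
  have "[:- r a, 1:] dvd q" using insert.prems by (simp add: poly_eq_0_iff_dvd)
  then obtain q' where q': "q = [:- r a, 1:] * q'" by (elim dvdE)
  have "\<forall>i\<in>S. poly q' (r i) = 0"
  proof
    fix i assume "i \<in> S"
    then have "r i \<noteq> r a" using insert.prems(1) insert.hyps(2) by (metis inj_on_contraD insertCI)
    moreover have "poly q (r i) = 0" using insert.prems \<open>i\<in>S\<close> by auto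
    ultimately show "poly q' (r i) = 0" using q' by simp
  qed
  then have "(\<Prod>i\<in>S. [:- r i, 1:]) dvd q'"
    using insert.IH insert.prems(1) by (meson inj_on_insert)
  then have "[:- r a, 1:] * (\<Prod>i\<in>S. [:- r i, 1:]) dvd [:- r a, 1:] * q'" by (rule mult_dvd_mono[OF dvd_refl])
  then show ?case using q' insert.hyps by (simp add: prod.insert)
qed

definition fbr :: "(nat \<Rightarrow> 'r::comm_ring_1) \<Rightarrow> 'r \<Rightarrow> nat \<Rightarrow> 'r" where
  "fbr iv z m = (\<Prod>i<m. z - of_nat i) * iv m"

lemma fbr_Suc:
  assumes "of_nat (Suc m) * iv (Suc m) = iv m"
  shows "of_nat (Suc m) * fbr iv z (Suc m) = (z - of_nat m) * fbr iv z m"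
proof -
  have "of_nat (Suc m) * fbr iv z (Suc m) = (\<Prod>i<Suc m. z - of_nat i) * (of_nat (Suc m) * iv (Suc m))"
    unfolding fbr_def by (simp add: algebra_simps)
  also have "\<dots> = (z - of_nat m) * fbr iv z m" using assms unfolding fbr_def
    by (simp add: algebra_simps)
  finally show ?thesis .
qed

lemma fps_deriv_rec:
  fixes f :: "nat \<Rightarrow> 'r::comm_ring_1"
  assumes "\<And>n. n + 1 < N \<Longrightarrow> of_nat (n+1) * f (n+1) = (\<alpha> - of_nat n * \<beta>) * f n"
  shows "\<forall>n. n + 1 < N \<longrightarrow> fps_nth ((1 + fps_const \<beta> * fps_X) * fps_deriv (Abs_fps f)) n = fps_nth (fps_const \<alpha> * Abs_fps f) n"
proof (intro allI impI)
  fix n assume n: "n + 1 < N"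
  have "fps_nth ((1 + fps_const \<beta> * fps_X) * fps_deriv (Abs_fps f)) n
      = of_nat (n+1) * f (n+1) + \<beta> * fps_nth (fps_X * fps_deriv (Abs_fps f)) n"
    by (simp add: algebra_simps mult.assoc)
  also have "fps_nth (fps_X * fps_deriv (Abs_fps f)) n = of_nat n * f n"
    by (cases n) (auto simp: fps_X_mult_nth)
  finally show "fps_nth ((1 + fps_const \<beta> * fps_X) * fps_deriv (Abs_fps f)) n = fps_nth (fps_const \<alpha> * Abs_fps f) n"
    using assms[OF n] by (simp add: algebra_simps)
qed

lemma fps_agree_mult:
  fixes P Q R :: "'a::comm_semiring_1 fps"
  assumes "\<forall>n<N. fps_nth P n = fps_nth Q n"
  shows "\<forall>n<N. fps_nth (R * P) n = fps_nth (R * Q) n"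
  using assms by (auto simp: fps_mult_nth intro!: sum.cong)

lemma fps_agree_mult':
  fixes P Q R :: "'a::comm_semiring_1 fps"
  assumes "\<forall>n<N. fps_nth P n = fps_nth Q n"
  shows "\<forall>n<N. fps_nth (P * R) n = fps_nth (Q * R) n"
  using fps_agree_mult[OF assms, of R] by (simp add: mult.commute[of P] mult.commute[of Q])


lemma coeff_extract_l:
  fixes G :: "'r::comm_ring_1 fps"
  assumes "0 < n"
  shows "fps_nth (fps_deriv G + fps_const d * (fps_X * fps_deriv G) + fps_const c * (fps_X^2 * fps_deriv G)) n
     = of_nat (n+1) * fps_nth G (n+1) + d * of_nat n * fps_nth G n + c * of_nat (n - 1) * fps_nth G (n - 1)"
proof -
  have a: "fps_nth (fps_X * fps_deriv G) n = of_nat n * fps_nth G n"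
    using assms by (simp add: fps_X_mult_nth)
  have b: "fps_nth (fps_X^2 * fps_deriv G) n = of_nat (n - 1) * fps_nth G (n - 1)"
  proof (cases "n = 1")
    case True then show ?thesis by (simp add: fps_X_power_mult_nth)
  next
    case False
    then have "\<not> n < 2" "n - 2 + 1 = n - 1" using assms by auto
    then show ?thesis by (simp only: fps_X_power_mult_nth if_False fps_deriv_nth)
  qed
  show ?thesis by (simp only: fps_add_nth fps_mult_left_const_nth a b fps_deriv_nth mult.assoc)
qed

lemma coeff_extract_r:
  fixes G :: "'r::comm_ring_1 fps"
  shows "fps_nth ((fps_const e + fps_const f * fps_X) * G) n
     = e * fps_nth G n + (if n = 0 then 0 else f * fps_nth G (n - 1))"
proof -
  have "(fps_const e + fps_const f * fps_X) * G = fps_const e * G + fps_const f * (fps_X * G)"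
    by (simp add: algebra_simps)
  then show ?thesis by (simp add: fps_X_mult_nth)
qed

lemma fps_rec2:
  fixes a b :: "nat \<Rightarrow> 'r::comm_ring_1"
  assumes ha: "\<And>n. n + 1 < N \<Longrightarrow> of_nat (n+1) * a (n+1) = (z1 - of_nat n * 1) * a n"
    and hb: "\<And>n. n + 1 < N \<Longrightarrow> of_nat (n+1) * b (n+1) = (c * z2 - of_nat n * c) * b n"
    and g: "g = fps_nth (Abs_fps a * Abs_fps b)"
  shows "\<And>n. 0 < n \<Longrightarrow> n + 1 < N \<Longrightarrow>
      of_nat (n+1) * g (n+1) + (1 + c) * of_nat n * g n + c * of_nat (n - 1) * g (n - 1)
      = (z1 + c * z2) * g n + c * (z1 + z2) * g (n - 1)"
    and "1 < N \<Longrightarrow> g 1 = (z1 + c * z2) * g 0"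
proof -
  define A where "A = Abs_fps a"
  define B where "B = Abs_fps b"
  define X where "X = (fps_X :: 'r fps)"
  have hA: "\<forall>n<N-1. fps_nth ((1 + X) * fps_deriv A) n = fps_nth (fps_const z1 * A) n"
    using fps_deriv_rec[of N a z1 1, OF ha] unfolding A_def X_def by auto
  have hB: "\<forall>n<N-1. fps_nth ((1 + fps_const c * X) * fps_deriv B) n = fps_nth (fps_const (c * z2) * B) n"
    using fps_deriv_rec[of N b "c * z2" c, OF hb] unfolding B_def X_def by auto
  have key: "(1 + X) * (1 + fps_const c * X) * fps_deriv (A * B)
     = ((1 + X) * fps_deriv A) * ((1 + fps_const c * X) * B) + ((1 + fps_const c * X) * fps_deriv B) * ((1 + X) * A)"
    by (simp add: fps_deriv_mult algebra_simps)
  have e1: "\<forall>n<N-1. fps_nth (((1 + X) * fps_deriv A) * ((1 + fps_const c * X) * B)) n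
      = fps_nth ((fps_const z1 * A) * ((1 + fps_const c * X) * B)) n"
    by (rule fps_agree_mult'[OF hA])
  have e2: "\<forall>n<N-1. fps_nth (((1 + fps_const c * X) * fps_deriv B) * ((1 + X) * A)) n
      = fps_nth ((fps_const (c * z2) * B) * ((1 + X) * A)) n"
    by (rule fps_agree_mult'[OF hB])
  have rhs: "(fps_const z1 * A) * ((1 + fps_const c * X) * B) + (fps_const (c * z2) * B) * ((1 + X) * A)
      = (fps_const (z1 + c * z2) + fps_const (c * (z1 + z2)) * X) * (A * B)"
    by (simp add: algebra_simps flip: fps_const_add fps_const_mult)
  have lhs: "(1 + X) * (1 + fps_const c * X) * fps_deriv (A * B)
      = fps_deriv (A * B) + fps_const (1 + c) * (X * fps_deriv (A * B)) + fps_const c * (X^2 * fps_deriv (A * B))"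
    by (simp add: algebra_simps power2_eq_square flip: fps_const_add)
  have main: "\<forall>n<N-1. fps_nth (fps_deriv (A * B) + fps_const (1 + c) * (X * fps_deriv (A * B)) + fps_const c * (X^2 * fps_deriv (A * B))) n
      = fps_nth ((fps_const (z1 + c * z2) + fps_const (c * (z1 + z2)) * X) * (A * B)) n"
    using e1 e2 unfolding key[unfolded lhs] rhs[symmetric] by (simp add: fps_add_nth)
  have gG: "g = fps_nth (A * B)" unfolding g A_def B_def ..
  show "\<And>n. 0 < n \<Longrightarrow> n + 1 < N \<Longrightarrow>
      of_nat (n+1) * g (n+1) + (1 + c) * of_nat n * g n + c * of_nat (n - 1) * g (n - 1)
      = (z1 + c * z2) * g n + c * (z1 + z2) * g (n - 1)"
  proof -
    fix n :: nat assume n: "0 < n" "n + 1 < N"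
    have "n < N - 1" using n by linarith
    from main[rule_format, OF this] n show "of_nat (n+1) * g (n+1) + (1 + c) * of_nat n * g n + c * of_nat (n - 1) * g (n - 1)
      = (z1 + c * z2) * g n + c * (z1 + z2) * g (n - 1)"
      unfolding gG X_def coeff_extract_l[OF n(1)] coeff_extract_r by simp
  qed
  show "1 < N \<Longrightarrow> g 1 = (z1 + c * z2) * g 0"
  proof -
    assume "1 < N"
    then have "0 < N - 1" by linarith
    from main[rule_format, OF this] show ?thesis unfolding gG X_def coeff_extract_r
      by (simp add: fps_X_power_mult_nth fps_X_mult_nth)
  qed
qed


section \<open>Part A: closed form of b_{1,s}\<close>

lemma fact_nz_char:
  assumes "prime CHAR('a::comm_ring_1)" "m < CHAR('a)"
  shows "(of_nat (fact m :: nat) :: 'a) \<noteq> 0"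
  using assms prime_dvd_fact_iff[of "CHAR('a)" m] by (simp add: of_nat_eq_0_iff_char_dvd)

definition ivK :: "nat \<Rightarrow> 'a::field" where "ivK m = 1 / of_nat (fact m :: nat)"
definition ivP :: "nat \<Rightarrow> 'a::field poly" where "ivP m = [:ivK m:]"

lemma ivK_Suc:
  assumes "prime CHAR('a::field)" "Suc m < CHAR('a)"
  shows "of_nat (Suc m) * (ivK (Suc m) :: 'a) = ivK m"
proof -
  have "(of_nat (fact m :: nat) :: 'a) \<noteq> 0" using fact_nz_char[OF assms(1)] assms(2) by simp
  moreover have "(of_nat (Suc m) :: 'a) \<noteq> 0" using char_of_nat_nz[of "Suc m"] assms by simp
  moreover have "(of_nat (fact (Suc m) :: nat) :: 'a) = of_nat (Suc m) * of_nat (fact m :: nat)"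
    by (simp only: fact_Suc of_nat_mult of_nat_id)
  ultimately show ?thesis unfolding ivK_def by (simp add: divide_simps del: of_nat_Suc)
qed

lemma ivP_Suc:
  assumes "prime CHAR('a::field)" "Suc m < CHAR('a)"
  shows "of_nat (Suc m) * (ivP (Suc m) :: 'a poly) = ivP m"
  using ivK_Suc[OF assms] unfolding ivP_def by (simp add: of_nat_poly mult.commute)

lemma fbinom_fbr: "fbinom x m = fbr ivK x m"
  unfolding fbinom_def fbr_def ivK_def by simp

lemma poly_fbr: "poly (fbr ivP z m) x = fbr ivK (poly z x) m"
  unfolding fbr_def ivP_def by (simp add: poly_prod of_nat_poly)

definition aA :: "nat \<Rightarrow> 'a::field poly" where "aA n = fbr ivP [:-1,1:] n"
definition bA :: "nat \<Rightarrow> nat \<Rightarrow> 'a::field poly" where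
  "bA s n = [:-1/of_nat s:]^n * fbr ivP [:-1, of_nat s:] n"
definition gA :: "nat \<Rightarrow> nat \<Rightarrow> 'a::field poly" where
  "gA s = fps_nth (Abs_fps aA * Abs_fps (bA s))"

lemma gA_rec:
  assumes "prime CHAR('a::field)"
  shows "\<And>n. 0 < n \<Longrightarrow> n + 1 < CHAR('a) \<Longrightarrow>
      of_nat (n+1) * (gA s (n+1) :: 'a poly) + (1 + [:-1/of_nat s:]) * of_nat n * gA s n + [:-1/of_nat s:] * of_nat (n - 1) * gA s (n - 1)
      = ([:-1,1:] + [:-1/of_nat s:] * [:-1, of_nat s:]) * gA s n + [:-1/of_nat s:] * ([:-1,1:] + [:-1, of_nat s:]) * gA s (n - 1)"
    and "1 < CHAR('a) \<Longrightarrow> (gA s 1 :: 'a poly) = ([:-1,1:] + [:-1/of_nat s:] * [:-1, of_nat s:]) * gA s 0"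
proof -
  have ha: "of_nat (n+1) * aA (n+1) = ([:-1,1:] - of_nat n * 1) * (aA n :: 'a poly)" if "n + 1 < CHAR('a)" for n
    using fbr_Suc[of n ivP, OF ivP_Suc[OF assms]] that unfolding aA_def by simp
  have hb: "of_nat (n+1) * bA s (n+1) = ([:-1/of_nat s:] * [:-1, of_nat s:] - of_nat n * [:-1/of_nat s:]) * (bA s n :: 'a poly)"
    if "n + 1 < CHAR('a)" for n
  proof -
    have "of_nat (n+1) * bA s (n+1) = [:-1/of_nat s:]^(n+1) * (of_nat (Suc n) * fbr ivP [:-1, of_nat s:] (Suc n) :: 'a poly)"
      unfolding bA_def by (simp only: mult.left_commute Suc_eq_plus1)
    also have "\<dots> = [:-1/of_nat s:]^(n+1) * (([:-1, of_nat s:] - of_nat n) * fbr ivP [:-1, of_nat s:] n)"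
      using fbr_Suc[of n ivP, OF ivP_Suc[OF assms]] that by simp
    finally show ?thesis unfolding bA_def by (simp add: algebra_simps)
  qed
  note R = fps_rec2[of "CHAR('a)" aA "[:-1,1:]" "bA s" "[:-1/of_nat s:]" "[:-1, of_nat s:]" "gA s", OF ha hb gA_def]
  show "\<And>n. 0 < n \<Longrightarrow> n + 1 < CHAR('a) \<Longrightarrow>
      of_nat (n+1) * (gA s (n+1) :: 'a poly) + (1 + [:-1/of_nat s:]) * of_nat n * gA s n + [:-1/of_nat s:] * of_nat (n - 1) * gA s (n - 1)
      = ([:-1,1:] + [:-1/of_nat s:] * [:-1, of_nat s:]) * gA s n + [:-1/of_nat s:] * ([:-1,1:] + [:-1, of_nat s:]) * gA s (n - 1)"
    by (rule R(1))
  show "1 < CHAR('a) \<Longrightarrow> (gA s 1 :: 'a poly) = ([:-1,1:] + [:-1/of_nat s:] * [:-1, of_nat s:]) * gA s 0"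
    by (rule R(2))
qed

lemma gA_0: "gA s 0 = 1"
  unfolding gA_def aA_def bA_def fbr_def ivP_def ivK_def by (simp add: fps_mult_nth)


lemma dmul: "degree p \<le> a \<Longrightarrow> degree q \<le> b \<Longrightarrow> a + b \<le> n \<Longrightarrow> degree (p * q) \<le> n"
  using degree_mult_le[of p q] by linarith

lemma lin_rearr:
  fixes x a b k m u v :: "'r::comm_ring_1"
  assumes "x + a * u + b * v = k * u + m * v"
  shows "x = (k - a) * u + (m - b) * v"
  using assms by (simp add: algebra_simps)

lemma gA_deg:
  assumes p: "prime CHAR('a::field)" and s: "(of_nat s :: 'a) \<noteq> 0"
  shows "n < CHAR('a) \<Longrightarrow> degree (gA s n :: 'a poly) \<le> n div 2"
proof (induction n rule: less_induct)
  case (less n)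
  define c :: "'a poly" where "c = [:-1/of_nat s:]"
  have k1: "[:-1,1:] + c * [:-1, of_nat s:] = [:1 / of_nat s - 1:]"
    unfolding c_def using s by simp
  show ?case
  proof (cases n)
    case 0 then show ?thesis by (simp add: gA_0)
  next
    case (Suc m)
    show ?thesis
    proof (cases m)
      case 0
      have "1 < CHAR('a)" using less.prems Suc 0 by simp
      from gA_rec(2)[OF p this, of s] k1 have "(gA s 1 :: 'a poly) = [:1 / of_nat s - 1:]"
        unfolding c_def by (simp add: gA_0)
      then show ?thesis using Suc 0 by simp
    next
      case (Suc k)
      define n' where "n' = Suc k"
      have n: "n = n' + 1" "0 < n'" "n' + 1 < CHAR('a)" using less.prems Suc \<open>n = Suc m\<close> unfolding n'_def by auto
      have ih1: "degree (gA s n' :: 'a poly) \<le> n' div 2" using less.IH[of n'] n by simp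
      have ih2: "degree (gA s (n' - 1) :: 'a poly) \<le> (n' - 1) div 2" using less.IH[of "n' - 1"] n by simp
      have e: "of_nat (n'+1) * gA s (n'+1) = ([:1 / of_nat s - 1:] - (1 + c) * of_nat n') * gA s n'
          + (c * ([:-1,1:] + [:-1, of_nat s:]) - c * of_nat (n' - 1)) * (gA s (n' - 1) :: 'a poly)"
        using lin_rearr[OF gA_rec(1)[OF p n(2) n(3), of s, unfolded c_def[symmetric] mult.assoc[symmetric] k1]] .
      have dc: "degree c = 0" unfolding c_def by simp
      have dc1: "degree (1 + c) = 0"
      proof -
        have "degree (1 + c) \<le> 0" by (rule degree_add_le) (simp_all add: dc)
        then show ?thesis by simp
      qed
      have d1: "degree ([:1 / of_nat s - 1:] - (1 + c) * of_nat n') \<le> 0"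
      proof (rule degree_diff_le)
        show "degree ((1 + c) * of_nat n') \<le> 0"
          by (rule dmul[of _ 0 _ 0]) (auto simp: dc1 of_nat_poly)
      qed simp
      have d2: "degree (c * ([:-1,1:] + [:-1, of_nat s:]) - c * of_nat (n' - 1)) \<le> 1"
      proof (rule degree_diff_le)
        show "degree (c * ([:-1,1:] + [:-1, of_nat s:])) \<le> 1"
          by (rule dmul[of _ 0 _ 1]) (auto intro!: degree_add_le simp: dc)
        show "degree (c * of_nat (n' - 1)) \<le> 1"
          by (rule dmul[of _ 0 _ 0]) (auto simp: dc of_nat_poly)
      qed
      have "degree (([:1 / of_nat s - 1:] - (1 + c) * of_nat n') * gA s n') \<le> (n' + 1) div 2"
        by (rule dmul[OF d1 ih1]) auto
      moreover have "degree ((c * ([:-1,1:] + [:-1, of_nat s:]) - c * of_nat (n' - 1)) * gA s (n' - 1)) \<le> (n' + 1) div 2"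
        by (rule dmul[OF d2 ih2]) (use n(2) in auto)
      ultimately have "degree (of_nat (n'+1) * gA s (n'+1) :: 'a poly) \<le> (n' + 1) div 2"
        unfolding e by (rule degree_add_le)
      moreover have "(of_nat (n'+1) :: 'a) \<noteq> 0" using char_of_nat_nz[of "n'+1"] n by simp
      ultimately show ?thesis using n(1) by (simp add: of_nat_poly)
    qed
  qed
qed


definition bgen :: "nat \<Rightarrow> 'a::field \<Rightarrow> 'a" where
  "bgen s \<gamma> = (\<Sum>k\<le>CHAR('a)-1. (-(1/of_nat s))^k * fbinom (\<gamma> - 1) (CHAR('a)-1-k) * fbinom (of_nat s * \<gamma> - 1) k)"

lemma poly_gA:
  "poly (gA s n) \<gamma> = (\<Sum>k\<le>n. (-(1/of_nat s))^k * fbinom (\<gamma> - 1) (n-k) * fbinom (of_nat s * \<gamma> - 1) (k::nat))"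
proof -
  have "poly (gA s n) \<gamma> = (\<Sum>i=0..n. fbinom (\<gamma> - 1) i * ((-(1/of_nat s))^(n-i) * fbinom (of_nat s * \<gamma> - 1) (n - i)))"
    unfolding gA_def fps_mult_nth aA_def bA_def by (simp add: poly_sum poly_fbr fbinom_fbr mult.commute)
  also have "\<dots> = (\<Sum>k=0..n. fbinom (\<gamma> - 1) (n - k) * ((-(1/of_nat s))^k * fbinom (of_nat s * \<gamma> - 1) k))"
    by (subst sum.atLeastAtMost_rev) (rule sum.cong, auto)
  finally show ?thesis by (simp add: atLeast0AtMost algebra_simps)
qed

lemma bgen_gA: "bgen s \<gamma> = poly (gA s (CHAR('a)-1)) (\<gamma>::'a::field)"
  unfolding bgen_def poly_gA ..

lemma fbinom_zero: "t < m \<Longrightarrow> fbinom (of_nat t :: 'a::field) m = 0"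
  unfolding fbinom_def by (auto simp: prod_zero_iff intro!: bexI[of _ t])

lemma bgen_root:
  assumes p: "prime CHAR('a::field)" and s: "0 < s" "s < CHAR('a)" and j: "0 < j" "j < CHAR('a)"
    and J: "j + (s * j) mod CHAR('a) < CHAR('a)"
  shows "bgen s (of_nat j :: 'a) = 0"
proof -
  define P where "P = CHAR('a)"
  define u where "u = (s * j) mod P"
  have "\<not> P dvd s * j" using p s j unfolding P_def by (auto simp: prime_dvd_mult_iff dest: dvd_imp_le)
  then have u0: "0 < u" unfolding u_def by (simp add: dvd_eq_mod_eq_0)
  have e1: "(of_nat j :: 'a) - 1 = of_nat (j - 1)" using j by (simp add: of_nat_diff)
  have "(of_nat s * of_nat j :: 'a) = of_nat u" unfolding u_def P_def by (simp flip: of_nat_mult)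
  then have e2: "(of_nat s * of_nat j :: 'a) - 1 = of_nat (u - 1)" using u0 by (simp add: of_nat_diff)
  have "(\<Sum>k\<le>P-1. (-(1/of_nat s))^k * fbinom (of_nat j - 1 :: 'a) (P-1-k) * fbinom (of_nat s * of_nat j - 1) k) = 0"
  proof (rule sum.neutral, intro ballI)
    fix k assume "k \<in> {..P-1}"
    show "(-(1/of_nat s))^k * fbinom (of_nat j - 1 :: 'a) (P-1-k) * fbinom (of_nat s * of_nat j - 1) k = 0"
    proof (cases "k < u")
      case True
      then have "j - 1 < P - 1 - k" using J j unfolding u_def P_def by linarith
      then show ?thesis unfolding e1 by (simp add: fbinom_zero)
    next
      case False
      then have "u - 1 < k" using u0 by linarith
      then show ?thesis unfolding e2 by (simp add: fbinom_zero)
    qed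
  qed
  then show ?thesis unfolding bgen_def P_def .
qed


lemma prod_minus_one: "(\<Prod>i<m. (-1 - of_nat i :: 'a::comm_ring_1)) = (-1)^m * of_nat (fact m :: nat)"
  by (induction m) (simp_all add: algebra_simps of_nat_mult)

lemma fbinom_minus_one:
  assumes "prime CHAR('a::field)" "m < CHAR('a)"
  shows "fbinom (-1 :: 'a) m = (-1)^m"
  using fact_nz_char[OF assms] unfolding fbinom_def prod_minus_one by simp

lemma char_odd_pow:
  assumes "prime CHAR('a::field)" "odd CHAR('a)"
  shows "(- (1 / of_nat s) :: 'a) ^ CHAR('a) = - (1 / of_nat s)"
proof -
  have "(- (1 / of_nat s) :: 'a) ^ CHAR('a) = (-1)^CHAR('a) * (1 / of_nat s ^ CHAR('a))"
    by (simp only: power_minus[of "1 / of_nat s"] power_one_over)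
  also have "(of_nat s :: 'a) ^ CHAR('a) = of_nat s" using char_of_nat_pow[OF assms(1)] .
  also have "(-1 :: 'a)^CHAR('a) = -1" using assms(2) by simp
  finally show ?thesis by simp
qed

lemma bgen_zero:
  assumes p: "prime CHAR('a::field)" "odd CHAR('a)" and s: "0 < s" "s + 1 < CHAR('a)"
  shows "bgen s (0 :: 'a) = 1"
proof -
  define P where "P = CHAR('a)"
  define x :: 'a where "x = - (1 / of_nat s)"
  have P2: "2 < P" using prime_ge_2_nat[of P] p unfolding P_def by (cases "CHAR('a) = 2") auto
  have x1: "x \<noteq> 1"
  proof
    assume "x = 1"
    moreover have sn: "(of_nat s :: 'a) \<noteq> 0" using char_of_nat_nz[where 'a='a, of s] s by simp
    ultimately have "(of_nat s :: 'a) = -1" unfolding x_def by (simp add: field_simps)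
    then have "(of_nat (s + 1) :: 'a) = 0" by simp
    then show False using char_of_nat_nz[where 'a='a, of "s+1"] s by simp
  qed
  have "bgen s (0::'a) = (\<Sum>k\<le>P-1. x^k * fbinom (-1::'a) (P-1-k) * fbinom (-1) k)"
    unfolding bgen_def P_def x_def by simp
  also have "\<dots> = (\<Sum>k\<le>P-1. x^k)"
  proof (rule sum.cong)
    fix k assume "k \<in> {..P-1}"
    then have k: "P - 1 - k < CHAR('a)" "k < CHAR('a)" "P - 1 - k + k = P - 1" using P2 unfolding P_def by auto
    have "fbinom (-1::'a) (P-1-k) * fbinom (-1) k = (-1)^(P-1-k) * (-1)^k"
      using fbinom_minus_one[OF p(1) k(1)] fbinom_minus_one[OF p(1) k(2)] by simp
    also have "\<dots> = (-1)^(P-1)" using k(3) by (simp only: power_add[symmetric])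
    also have "\<dots> = 1" using p P2 unfolding P_def by (simp add: neg_one_even_power)
    finally show "x^k * fbinom (-1::'a) (P-1-k) * fbinom (-1) k = x^k" by (simp add: mult.assoc)
  qed simp
  also have "\<dots> = (\<Sum>k<P. x^k)" using P2 by (intro sum.cong) auto
  also have "\<dots> = (x^P - 1) / (x - 1)" using x1 by (rule geometric_sum)
  also have "x^P = x" unfolding x_def P_def using char_odd_pow[OF p] .
  finally show ?thesis using x1 by simp
qed


lemma dvd_deg_normalize:
  fixes B Q :: "'a::field poly"
  assumes "Q dvd B" "poly B 0 = 1" "degree B \<le> degree Q"
  shows "poly B x = poly Q x / poly Q 0"
proof -
  obtain r where r: "B = Q * r" using assms(1) by (elim dvdE)
  have B0: "B \<noteq> 0" using assms(2) by auto
  then have "Q \<noteq> 0" "r \<noteq> 0" using r by auto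
  then have "degree B = degree Q + degree r" using r degree_mult_eq by blast
  then have "degree r = 0" using assms(3) by linarith
  then obtain c where rr: "r = [:c:]" using degree_0_id by metis
  have c1: "poly Q 0 * c = 1" using assms(2) unfolding r rr by (simp add: mult.commute)
  then have "poly Q 0 \<noteq> 0" by auto
  moreover have "poly B x = poly Q x * c" unfolding r rr by (simp add: mult.commute)
  ultimately show ?thesis using c1 by (simp add: field_simps)
qed

lemma prod_lin_normalize:
  fixes x :: "'a::field"
  assumes "finite S" "\<forall>i\<in>S. r i \<noteq> 0"
  shows "poly (\<Prod>i\<in>S. [:- r i, 1:]) x / poly (\<Prod>i\<in>S. [:- r i, 1:]) 0 = (\<Prod>i\<in>S. 1 - x / r i)"
proof -
  have "poly (\<Prod>i\<in>S. [:- r i, 1:]) x / poly (\<Prod>i\<in>S. [:- r i, 1:]) 0 = (\<Prod>i\<in>S. x - r i) / (\<Prod>i\<in>S. - r i)"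
    by (simp add: poly_prod)
  also have "\<dots> = (\<Prod>i\<in>S. (x - r i) / (- r i))" by (rule prod_dividef[symmetric])
  also have "\<dots> = (\<Prod>i\<in>S. 1 - x / r i)"
    using assms(2) by (intro prod.cong) (auto simp: field_simps)
  finally show ?thesis .
qed

lemma degree_prod_lin: "finite S \<Longrightarrow> degree (\<Prod>i\<in>S. [:- r i, 1:] :: 'a::field poly) = card S"
  by (induction S rule: finite_induct) (simp_all add: degree_mult_eq prod_zero_iff del: mult_pCons_left)

lemma mod_complement:
  fixes a b P :: nat
  assumes "(a + b) mod P = 0" "b mod P \<noteq> 0" and P: "0 < P"
  shows "a mod P = P - b mod P"
proof -
  have "(a mod P + b mod P) mod P = 0" using assms(1) by (simp add: mod_add_eq)
  moreover have "0 < a mod P + b mod P" using assms(2) by auto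
  moreover have "a mod P + b mod P < 2 * P" using mod_less_divisor[OF P, of a] mod_less_divisor[OF P, of b] by linarith
  ultimately have "a mod P + b mod P = P"
  proof -
    obtain k where k: "a mod P + b mod P = P * k" using \<open>(a mod P + b mod P) mod P = 0\<close> by (auto elim!: dvdE simp: dvd_eq_mod_eq_0[symmetric])
    have "0 < k" using k \<open>0 < a mod P + b mod P\<close> by (cases k) auto
    moreover have "k < 2" using k \<open>a mod P + b mod P < 2 * P\<close> P by (simp add: mult.commute)
    ultimately have "k = 1" by linarith
    then show ?thesis using k by simp
  qed
  then show ?thesis by linarith
qed

definition Jset :: "nat \<Rightarrow> nat \<Rightarrow> nat set" where
  "Jset P s = {i. 0 < i \<and> i < P \<and> i + (s * i) mod P < P}"

lemma Jset_card:
  assumes P: "prime P" and s: "0 < s" "s + 1 < P"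
  shows "P - 1 \<le> 2 * card (Jset P s)"
proof -
  define J where "J = Jset P s"
  define C where "C = {0<..<P} - J"
  have JS: "J \<subseteq> {0<..<P}" unfolding J_def Jset_def by auto
  have fin: "finite J" "finite C" using JS finite_subset unfolding C_def by auto
  have inj: "inj_on (\<lambda>i. P - i) C" unfolding C_def by (auto intro!: inj_onI)
  have img: "(\<lambda>i. P - i) ` C \<subseteq> J"
  proof
    fix y assume "y \<in> (\<lambda>i. P - i) ` C"
    then obtain i where i: "i \<in> C" "y = P - i" by auto
    have i0: "0 < i" "i < P" "\<not> i + (s * i) mod P < P" using i unfolding C_def J_def Jset_def by auto
    have nd: "\<not> P dvd s * i" using P s i0 by (auto simp: prime_dvd_mult_iff dest: dvd_imp_le)
    then have u0: "(s * i) mod P \<noteq> 0" by (simp add: dvd_eq_mod_eq_0)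
    have ne: "i + (s * i) mod P \<noteq> P"
    proof
      assume "i + (s * i) mod P = P"
      then have "(i + s * i) mod P = 0" by (metis mod_add_right_eq mod_self)
      then have d: "P dvd (i + s * i)" by (rule mod_0_imp_dvd)
      have "(s + 1) * i = i + s * i" by (simp only: distrib_right mult_1 add.commute)
      then have "P dvd (s + 1) * i" using d by (simp only:)
      then have "P dvd (s + 1) \<or> P dvd i" using P prime_dvd_mult_iff by blast
      then show False using s i0 by (auto dest: dvd_imp_le)
    qed
    have "s * (P - i) + s * i = s * P" using i0 by (simp add: diff_mult_distrib2)
    then have "(s * (P - i) + s * i) mod P = 0" by simp
    then have u: "(s * (P - i)) mod P = P - (s * i) mod P" using mod_complement[OF _ u0] i0 by simp
    have "(s * i) mod P < P" using i0 by simp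
    then have "P - i + (s * (P - i)) mod P < P" unfolding u using i0(2,3) ne by linarith
    moreover have "0 < P - i" "P - i < P" using i0 by auto
    ultimately show "y \<in> J" unfolding J_def Jset_def i(2) by simp
  qed
  have "card C \<le> card J" using card_inj_on_le[OF inj img fin(1)] .
  moreover have "card J \<le> P - 1" using card_mono[OF _ JS] by simp
  moreover have "card C = P - 1 - card J" unfolding C_def using card_Diff_subset[OF fin(1) JS] by simp
  ultimately show ?thesis unfolding J_def by linarith
qed


lemma bgen_closed:
  assumes p: "prime CHAR('a::field)" "odd CHAR('a)" and s: "0 < s" "s + 1 < CHAR('a)"
  shows "bgen s (\<gamma>::'a) = (\<Prod>i\<in>Jset CHAR('a) s. 1 - \<gamma> / of_nat i)"
proof -
  define P where "P = CHAR('a)"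
  define J where "J = Jset P s"
  define Q :: "'a poly" where "Q = (\<Prod>i\<in>J. [:- of_nat i, 1:])"
  define B :: "'a poly" where "B = gA s (P - 1)"
  have JS: "J \<subseteq> {0<..<P}" unfolding J_def Jset_def by auto
  then have finJ: "finite J" using finite_subset by auto
  have inj: "inj_on (of_nat :: nat \<Rightarrow> 'a) J"
  proof (rule inj_onI)
    fix x y assume "x \<in> J" "y \<in> J" "(of_nat x :: 'a) = of_nat y"
    moreover have "x < CHAR('a)" "y < CHAR('a)" using JS \<open>x \<in> J\<close> \<open>y \<in> J\<close> unfolding P_def by auto
    ultimately show "x = y" using char_of_nat_inj[where 'a='a, of x y] by auto
  qed
  have roots: "\<forall>i\<in>J. poly B (of_nat i) = 0"
  proof
    fix i assume "i \<in> J"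
    then have "0 < i" "i < P" "i + (s * i) mod P < P" unfolding J_def Jset_def by auto
    then show "poly B (of_nat i) = 0" unfolding B_def P_def using bgen_root[OF p(1), of s i] s
      by (simp add: bgen_gA)
  qed
  have dvd: "Q dvd B" unfolding Q_def by (rule roots_prod_dvd[OF finJ inj roots])
  have B0: "poly B 0 = 1" unfolding B_def P_def using bgen_zero[OF p s] by (simp add: bgen_gA)
  have sn: "(of_nat s :: 'a) \<noteq> 0" using char_of_nat_nz[where 'a='a, of s] s by simp
  have "degree B \<le> (P - 1) div 2" unfolding B_def P_def using gA_deg[OF p(1) sn, of "CHAR('a) - 1"] p(1)
    by (simp add: prime_gt_0_nat)
  also have "\<dots> \<le> card J" using Jset_card[of P s] p s unfolding J_def P_def by simp
  also have "\<dots> = degree Q" unfolding Q_def using degree_prod_lin[OF finJ, of of_nat] by (rule sym)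
  finally have "poly B \<gamma> = poly Q \<gamma> / poly Q 0" using dvd_deg_normalize[OF dvd B0] by simp
  also have "\<dots> = (\<Prod>i\<in>J. 1 - \<gamma> / of_nat i)" unfolding Q_def
    by (rule prod_lin_normalize[OF finJ]) (use JS char_of_nat_nz[where 'a='a] in \<open>auto simp: P_def\<close>)
  finally show ?thesis unfolding B_def P_def J_def bgen_gA .
qed


section \<open>Part B: closed form of the Laguerre value\<close>

lemma monic_dvd_eq:
  fixes F Q :: "'a::field poly"
  assumes "Q dvd F" "F \<noteq> 0" "degree F \<le> degree Q" "lead_coeff F = lead_coeff Q"
  shows "F = Q"
proof -
  obtain r where r: "F = Q * r" using assms(1) by (elim dvdE)
  then have "Q \<noteq> 0" "r \<noteq> 0" using assms(2) by auto
  then have "degree F = degree Q + degree r" using r degree_mult_eq by blast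
  then have "degree r = 0" using assms(3) by linarith
  then obtain c where rr: "r = [:c:]" using degree_0_id by metis
  have "lead_coeff F = lead_coeff Q * c" unfolding r rr by (simp add: lead_coeff_mult)
  then have "c = 1" using assms(4) \<open>Q \<noteq> 0\<close> by simp
  then show ?thesis using r rr by simp
qed

lemma char_poly_prime: "prime CHAR('a::comm_ring_1) \<Longrightarrow> prime CHAR('a poly)"
  by simp

lemma lin_frob:
  assumes p: "prime CHAR('a::field)" "odd CHAR('a)"
  shows "[:- of_nat j, 1:] ^ CHAR('a) = monom 1 (CHAR('a)) - [:of_nat j :: 'a:]"
proof -
  have e: "[:- of_nat j, 1:] = [:- of_nat j:] + (monom 1 1 :: 'a poly)"
    by (simp add: monom_altdef)
  have "([:- of_nat j:] + (monom 1 1 :: 'a poly)) ^ CHAR('a poly) = [:- of_nat j:] ^ CHAR('a poly) + monom 1 1 ^ CHAR('a poly)"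
    by (rule freshmans_dream) (use p in simp_all)
  also have "[:- of_nat j:] ^ CHAR('a poly) = [:(- of_nat j) ^ CHAR('a) :: 'a:]" by (simp add: poly_const_pow)
  also have "(- of_nat j :: 'a) ^ CHAR('a) = - (of_nat j ^ CHAR('a))" using p(2) by (simp add: power_minus_odd)
  also have "(of_nat j :: 'a) ^ CHAR('a) = of_nat j" by (rule char_of_nat_pow[OF p(1)])
  also have "(monom 1 1 :: 'a poly) ^ CHAR('a poly) = monom 1 (CHAR('a))" by (simp add: monom_power)
  finally show ?thesis unfolding e by simp
qed

lemma Xp_minus_X:
  assumes p: "prime CHAR('a::field)"
  shows "monom 1 (CHAR('a)) - monom 1 1 = (\<Prod>j<CHAR('a). [:- of_nat j, 1:] :: 'a poly)"
proof (rule monic_dvd_eq)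
  define P where "P = CHAR('a)"
  have P1: "1 < P" using p prime_gt_1_nat unfolding P_def by blast
  have inj: "inj_on (of_nat :: nat \<Rightarrow> 'a) {..<P}"
  proof (rule inj_onI)
    fix x y assume "x \<in> {..<P}" "y \<in> {..<P}" "(of_nat x :: 'a) = of_nat y"
    then show "x = y" using char_of_nat_inj[where 'a='a, of x y] unfolding P_def by auto
  qed
  have "\<forall>j\<in>{..<P}. poly (monom 1 P - monom 1 1 :: 'a poly) (of_nat j) = 0"
    using char_of_nat_pow[OF p] unfolding P_def by (simp add: poly_monom)
  from roots_prod_dvd[OF _ inj this] show "(\<Prod>j<CHAR('a). [:- of_nat j, 1:] :: 'a poly) dvd monom 1 (CHAR('a)) - monom 1 1"
    unfolding P_def by simp
  have "degree (monom 1 P + - monom 1 1 :: 'a poly) = P"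
    by (subst degree_add_eq_left) (use P1 in \<open>auto simp: degree_monom_eq\<close>)
  then have dF: "degree (monom 1 P - monom 1 1 :: 'a poly) = P" by simp
  then show "monom 1 (CHAR('a)) - monom 1 1 \<noteq> (0 :: 'a poly)" using P1 unfolding P_def by auto
  have dQ: "degree (\<Prod>j<P. [:- of_nat j, 1:] :: 'a poly) = P" using degree_prod_lin[of "{..<P}" of_nat] by simp
  show "degree (monom 1 (CHAR('a)) - monom 1 1 :: 'a poly) \<le> degree (\<Prod>j<CHAR('a). [:- of_nat j, 1:] :: 'a poly)"
    using dF dQ unfolding P_def by simp
  have "lead_coeff (monom 1 P - monom 1 1 :: 'a poly) = 1" using dF P1 by simp
  moreover have "lead_coeff (\<Prod>j<P. [:- of_nat j, 1:] :: 'a poly) = 1" by (simp add: lead_coeff_prod)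
  ultimately show "lead_coeff (monom 1 (CHAR('a)) - monom 1 1 :: 'a poly) = lead_coeff (\<Prod>j<CHAR('a). [:- of_nat j, 1:] :: 'a poly)"
    unfolding P_def by simp
qed


definition Lj :: "nat \<Rightarrow> 'a::field poly" where "Lj j = [:- of_nat j, 1:]"

definition Dpoly :: "'a::field poly" where
  "Dpoly = (\<Prod>j\<in>{1..<CHAR('a)}. Lj j ^ (CHAR('a) - j))"

definition tB :: "'a::field poly" where "tB = monom 1 1 - monom 1 (CHAR('a))"

definition Cp :: "'a::field poly" where
  "Cp = (\<Sum>k\<le>CHAR('a)-1. fbr ivP (monom 1 (CHAR('a)) - 1) (CHAR('a)-1-k) * tB ^ k * ivP k)"

definition lgen :: "'a::field \<Rightarrow> 'a" where
  "lgen x = (\<Sum>k\<le>CHAR('a)-1. fbinom (x ^ CHAR('a) - 1) (CHAR('a)-1-k) * (- (x ^ CHAR('a) - x)) ^ k / of_nat (fact k :: nat))"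

lemma poly_Cp: "poly Cp x = lgen (x::'a::field)"
  unfolding Cp_def lgen_def tB_def
  by (simp add: poly_sum poly_fbr poly_monom fbinom_fbr ivP_def ivK_def)

lemma fbr_frob:
  assumes p: "prime CHAR('a::field)" "odd CHAR('a)"
  shows "fbr ivP (monom 1 (CHAR('a)) - 1) m = (\<Prod>j\<in>{1..m}. Lj j ^ CHAR('a)) * (ivP m :: 'a poly)"
proof -
  have "(\<Prod>i<m. monom 1 (CHAR('a)) - 1 - of_nat i) = (\<Prod>i<m. Lj (Suc i) ^ CHAR('a) :: 'a poly)"
  proof (rule prod.cong)
    fix i assume "i \<in> {..<m}"
    have "monom 1 (CHAR('a)) - 1 - of_nat i = monom 1 (CHAR('a)) - [:of_nat (Suc i) :: 'a:]"
      by (simp add: of_nat_poly one_pCons)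
    also have "\<dots> = Lj (Suc i) ^ CHAR('a)" unfolding Lj_def by (rule lin_frob[OF p, symmetric])
    finally show "monom 1 (CHAR('a)) - 1 - of_nat i = (Lj (Suc i) ^ CHAR('a) :: 'a poly)" .
  qed simp
  also have "\<dots> = (\<Prod>j\<in>{1..m}. Lj j ^ CHAR('a))"
    by (rule prod.reindex_bij_witness[of _ "\<lambda>j. j - 1" Suc]) auto
  finally show ?thesis unfolding fbr_def by simp
qed

lemma tB_factor:
  assumes p: "prime CHAR('a::field)"
  shows "(tB :: 'a poly) = - (Lj 0 * (\<Prod>j\<in>{1..<CHAR('a)}. Lj j))"
proof -
  have "{..<CHAR('a)} = insert 0 {1..<CHAR('a)}" using p prime_gt_0_nat by auto
  then have "(\<Prod>j<CHAR('a). [:- of_nat j, 1:] :: 'a poly) = Lj 0 * (\<Prod>j\<in>{1..<CHAR('a)}. Lj j)"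
    unfolding Lj_def by simp
  then show ?thesis unfolding tB_def using Xp_minus_X[OF p] by (metis minus_diff_eq)
qed


lemma D_dvd_core:
  assumes "m + k = P - 1" "0 < P"
  shows "(\<Prod>j\<in>{1..<P}. Lj j ^ (P - j)) dvd (\<Prod>j\<in>{1..m}. Lj j ^ P) * (\<Prod>j\<in>{1..<P}. Lj j) ^ k"
proof -
  have "{j\<in>{1..<P}. j \<le> m} = {1..m}" using assms by auto
  then have "(\<Prod>j\<in>{1..m}. Lj j ^ P) = (\<Prod>j\<in>{1..<P}. if j \<le> m then Lj j ^ P else (1 :: 'a::field poly))"
    using prod.inter_filter[of "{1..<P}" "\<lambda>j. Lj j ^ P" "\<lambda>j. j \<le> m"] by simp
  then have e: "(\<Prod>j\<in>{1..m}. Lj j ^ P) * (\<Prod>j\<in>{1..<P}. Lj j) ^ k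
     = (\<Prod>j\<in>{1..<P}. (if j \<le> m then Lj j ^ P else (1 :: 'a poly)) * Lj j ^ k)"
    by (simp add: prod_power_distrib prod.distrib)
  show ?thesis unfolding e
  proof (rule prod_dvd_prod)
    fix j assume j: "j \<in> {1..<P}"
    show "Lj j ^ (P - j) dvd (if j \<le> m then Lj j ^ P else 1) * (Lj j ^ k :: 'a poly)"
    proof (cases "j \<le> m")
      case True
      then have "Lj j ^ (P - j) dvd (Lj j ^ (P + k) :: 'a poly)" by (intro le_imp_power_dvd) auto
      then show ?thesis using True by (simp add: power_add)
    next
      case False
      then have "Lj j ^ (P - j) dvd (Lj j ^ k :: 'a poly)" using assms by (intro le_imp_power_dvd) auto
      then show ?thesis using False by simp
    qed
  qed
qed

lemma D_dvd_Cp: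
  assumes p: "prime CHAR('a::field)" "odd CHAR('a)"
  shows "(Dpoly :: 'a poly) dvd Cp"
  unfolding Cp_def
proof (rule dvd_sum)
  fix k assume k: "k \<in> {..CHAR('a)-1}"
  define P where "P = CHAR('a)"
  define m where "m = P - 1 - k"
  have mk: "m + k = P - 1" "0 < P" using k p prime_gt_0_nat unfolding m_def P_def by auto
  have eq: "fbr ivP (monom 1 P - 1) m * tB ^ k * ivP k
      = ((\<Prod>j\<in>{1..m}. Lj j ^ P) * (\<Prod>j\<in>{1..<P}. Lj j) ^ k) * ((-1) ^ k * Lj 0 ^ k * ivP m * (ivP k :: 'a poly))"
    unfolding fbr_frob[OF p, folded P_def] tB_factor[OF p(1), folded P_def]
    by (simp add: power_mult_distrib power_minus[of "Lj 0 * _"] algebra_simps)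
  have dA: "(Dpoly :: 'a poly) dvd (\<Prod>j\<in>{1..m}. Lj j ^ P) * (\<Prod>j\<in>{1..<P}. Lj j) ^ k"
    unfolding Dpoly_def P_def[symmetric] by (rule D_dvd_core[OF mk])
  have "(Dpoly :: 'a poly) dvd fbr ivP (monom 1 P - 1) m * tB ^ k * ivP k"
    unfolding eq by (rule dvd_mult2[OF dA])
  then show "(Dpoly :: 'a poly) dvd fbr ivP (monom 1 (CHAR('a)) - 1) (CHAR('a) - 1 - k) * tB ^ k * ivP k"
    unfolding m_def P_def .
qed


lemma fps_rec3:
  fixes a b :: "nat \<Rightarrow> 'r::comm_ring_1"
  assumes ha: "\<And>n. n + 1 < N \<Longrightarrow> of_nat (n+1) * a (n+1) = (z1 - of_nat n * 1) * a n"
    and hb: "\<And>n. n + 1 < N \<Longrightarrow> of_nat (n+1) * b (n+1) = (\<alpha> - of_nat n * 0) * b n"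
    and g: "g = fps_nth (Abs_fps a * Abs_fps b)"
  shows "\<And>n. 0 < n \<Longrightarrow> n + 1 < N \<Longrightarrow>
      of_nat (n+1) * g (n+1) + of_nat n * g n = (z1 + \<alpha>) * g n + \<alpha> * g (n - 1)"
    and "1 < N \<Longrightarrow> g 1 = (z1 + \<alpha>) * g 0"
proof -
  define A where "A = Abs_fps a"
  define B where "B = Abs_fps b"
  define X where "X = (fps_X :: 'r fps)"
  have hA: "\<forall>n<N-1. fps_nth ((1 + X) * fps_deriv A) n = fps_nth (fps_const z1 * A) n"
    using fps_deriv_rec[of N a z1 1, OF ha] unfolding A_def X_def by auto
  have hB: "\<forall>n<N-1. fps_nth ((1 + fps_const 0 * X) * fps_deriv B) n = fps_nth (fps_const \<alpha> * B) n"
    using fps_deriv_rec[of N b \<alpha> 0, OF hb] unfolding B_def X_def by auto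
  have key: "(1 + X) * fps_deriv (A * B)
     = ((1 + X) * fps_deriv A) * B + ((1 + fps_const 0 * X) * fps_deriv B) * ((1 + X) * A)"
    by (simp add: fps_deriv_mult algebra_simps)
  have e1: "\<forall>n<N-1. fps_nth (((1 + X) * fps_deriv A) * B) n = fps_nth ((fps_const z1 * A) * B) n"
    by (rule fps_agree_mult'[OF hA])
  have e2: "\<forall>n<N-1. fps_nth (((1 + fps_const 0 * X) * fps_deriv B) * ((1 + X) * A)) n
      = fps_nth ((fps_const \<alpha> * B) * ((1 + X) * A)) n"
    by (rule fps_agree_mult'[OF hB])
  have rhs: "(fps_const z1 * A) * B + (fps_const \<alpha> * B) * ((1 + X) * A)
      = (fps_const (z1 + \<alpha>) + fps_const \<alpha> * X) * (A * B)"
    by (simp add: algebra_simps flip: fps_const_add fps_const_mult)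
  have lhs: "(1 + X) * fps_deriv (A * B)
      = fps_deriv (A * B) + fps_const 1 * (X * fps_deriv (A * B)) + fps_const 0 * (X^2 * fps_deriv (A * B))"
    by (simp add: algebra_simps)
  have main: "\<forall>n<N-1. fps_nth (fps_deriv (A * B) + fps_const 1 * (X * fps_deriv (A * B)) + fps_const 0 * (X^2 * fps_deriv (A * B))) n
      = fps_nth ((fps_const (z1 + \<alpha>) + fps_const \<alpha> * X) * (A * B)) n"
    using e1 e2 unfolding key[unfolded lhs] rhs[symmetric] by (simp add: fps_add_nth)
  have gG: "g = fps_nth (A * B)" unfolding g A_def B_def ..
  show "\<And>n. 0 < n \<Longrightarrow> n + 1 < N \<Longrightarrow>
      of_nat (n+1) * g (n+1) + of_nat n * g n = (z1 + \<alpha>) * g n + \<alpha> * g (n - 1)"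
  proof -
    fix n :: nat assume n: "0 < n" "n + 1 < N"
    have "n < N - 1" using n by linarith
    from main[rule_format, OF this] n show "of_nat (n+1) * g (n+1) + of_nat n * g n = (z1 + \<alpha>) * g n + \<alpha> * g (n - 1)"
      unfolding gG X_def coeff_extract_l[OF n(1)] coeff_extract_r by simp
  qed
  show "1 < N \<Longrightarrow> g 1 = (z1 + \<alpha>) * g 0"
  proof -
    assume "1 < N"
    then have "0 < N - 1" by linarith
    from main[rule_format, OF this] show ?thesis unfolding gG X_def coeff_extract_r
      by (simp add: fps_X_power_mult_nth fps_X_mult_nth)
  qed
qed

definition Yc :: "'a::field poly poly" where "Yc = [:[:0, 1:]:]"
definition uu :: "'a::field poly poly" where "uu = [:0, 1:]"
definition ivPP :: "nat \<Rightarrow> 'a::field poly poly" where "ivPP m = [:ivP m:]"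
definition a2 :: "nat \<Rightarrow> 'a::field poly poly" where "a2 n = fbr ivPP (Yc - uu - 1) n"
definition e2 :: "nat \<Rightarrow> 'a::field poly poly" where "e2 n = uu ^ n * ivPP n"
definition g2 :: "nat \<Rightarrow> 'a::field poly poly" where "g2 = fps_nth (Abs_fps a2 * Abs_fps e2)"

lemma ivPP_Suc:
  assumes "prime CHAR('a::field)" "Suc m < CHAR('a)"
  shows "of_nat (Suc m) * (ivPP (Suc m) :: 'a poly poly) = ivPP m"
  using ivP_Suc[OF assms] unfolding ivPP_def by (simp add: of_nat_poly[where 'a="'a poly"] mult.commute)

lemma g2_rec:
  assumes p: "prime CHAR('a::field)"
  shows "\<And>n. 0 < n \<Longrightarrow> n + 1 < CHAR('a) \<Longrightarrow>
      of_nat (n+1) * (g2 (n+1) :: 'a poly poly) + of_nat n * g2 n = (Yc - uu - 1 + uu) * g2 n + uu * g2 (n - 1)"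
    and "1 < CHAR('a) \<Longrightarrow> (g2 1 :: 'a poly poly) = (Yc - uu - 1 + uu) * g2 0"
proof -
  have ha: "of_nat (n+1) * a2 (n+1) = ((Yc - uu - 1) - of_nat n * 1) * (a2 n :: 'a poly poly)" if "n + 1 < CHAR('a)" for n
    using fbr_Suc[of n ivPP, OF ivPP_Suc[OF p]] that unfolding a2_def by simp
  have hb: "of_nat (n+1) * e2 (n+1) = (uu - of_nat n * 0) * (e2 n :: 'a poly poly)" if "n + 1 < CHAR('a)" for n
  proof -
    have "of_nat (n+1) * e2 (n+1) = uu ^ (n+1) * (of_nat (Suc n) * ivPP (Suc n) :: 'a poly poly)"
      unfolding e2_def by (simp only: mult.left_commute Suc_eq_plus1)
    also have "\<dots> = uu ^ (n+1) * ivPP n" using ivPP_Suc[OF p, of n] that by simp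
    finally show ?thesis unfolding e2_def by (simp add: algebra_simps)
  qed
  note R = fps_rec3[of "CHAR('a)" a2 "Yc - uu - 1" e2 uu g2, OF ha hb g2_def]
  show "\<And>n. 0 < n \<Longrightarrow> n + 1 < CHAR('a) \<Longrightarrow>
      of_nat (n+1) * (g2 (n+1) :: 'a poly poly) + of_nat n * g2 n = (Yc - uu - 1 + uu) * g2 n + uu * g2 (n - 1)"
    by (rule R(1))
  show "1 < CHAR('a) \<Longrightarrow> (g2 1 :: 'a poly poly) = (Yc - uu - 1 + uu) * g2 0"
    by (rule R(2))
qed

lemma g2_0: "g2 0 = 1"
  unfolding g2_def a2_def e2_def fbr_def ivPP_def ivP_def ivK_def by (simp add: fps_mult_nth one_pCons)


lemma g2_step:
  assumes p: "prime CHAR('a::field)" and n: "0 < n" "n + 1 < CHAR('a)"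
  shows "(g2 (n+1) :: 'a poly poly) = smult [:1 / of_nat (n+1):]
           (smult [:-1 - of_nat n, 1:] (g2 n) + pCons 0 (g2 (n - 1)))"
proof -
  have e: "of_nat (n+1) * (g2 (n+1) :: 'a poly poly) = (Yc - 1 - of_nat n) * g2 n + uu * g2 (n - 1)"
    using g2_rec(1)[OF p n] by (simp add: algebra_simps)
  have q: "Yc - 1 - of_nat n = [:[:-1 - of_nat n, 1:] :: 'a poly:]"
    unfolding Yc_def by (simp add: of_nat_poly one_pCons)
  have nz: "(of_nat (n+1) :: 'a) \<noteq> 0" using char_of_nat_nz[where 'a='a, of "n+1"] n by simp
  have "g2 (n+1) = smult [:1 / of_nat (n+1):] (of_nat (n+1) * (g2 (n+1) :: 'a poly poly))"
    using nz by (simp add: of_nat_poly flip: one_pCons)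
  also have "\<dots> = smult [:1 / of_nat (n+1):] (smult [:-1 - of_nat n, 1:] (g2 n) + pCons 0 (g2 (n - 1)))"
    unfolding e q uu_def by simp
  finally show ?thesis .
qed

lemma g2_inv:
  assumes p: "prime CHAR('a::field)"
  shows "n < CHAR('a) \<Longrightarrow> degree (g2 n :: 'a poly poly) \<le> n div 2 \<and> (\<forall>i. degree (coeff (g2 n :: 'a poly poly) i) \<le> n)
     \<and> (even n \<longrightarrow> degree (coeff (g2 n :: 'a poly poly) (n div 2)) = 0)"
proof (induction n rule: less_induct)
  case (less n)
  show ?case
  proof (cases n)
    case 0 then show ?thesis by (simp add: g2_0)
  next
    case (Suc m)
    show ?thesis
    proof (cases m)
      case 0
      have "1 < CHAR('a)" using less.prems Suc 0 by simp
      from g2_rec(2)[OF p this] have g1: "(g2 1 :: 'a poly poly) = [:[:-1, 1:]:]"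
        unfolding Yc_def by (simp add: g2_0 one_pCons)
      have "degree (coeff (g2 1 :: 'a poly poly) i) \<le> 1" for i unfolding g1 by (cases i) auto
      then show ?thesis using Suc 0 g1 by auto
    next
      case (Suc k)
      define n' where "n' = Suc k"
      have n: "n = n' + 1" "0 < n'" "n' + 1 < CHAR('a)" using less.prems Suc \<open>n = Suc m\<close> unfolding n'_def by auto
      have ih1: "degree (g2 n' :: 'a poly poly) \<le> n' div 2 \<and> (\<forall>i. degree (coeff (g2 n' :: 'a poly poly) i) \<le> n')
           \<and> (even n' \<longrightarrow> degree (coeff (g2 n' :: 'a poly poly) (n' div 2)) = 0)"
        using less.IH[of n'] n by simp
      have ih2: "degree (g2 (n'-1) :: 'a poly poly) \<le> (n'-1) div 2 \<and> (\<forall>i. degree (coeff (g2 (n'-1) :: 'a poly poly) i) \<le> n'-1)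
           \<and> (even (n'-1) \<longrightarrow> degree (coeff (g2 (n'-1) :: 'a poly poly) ((n'-1) div 2)) = 0)"
        using less.IH[of "n'-1"] n by simp
      note st = g2_step[OF p n(2,3)]
      have d1: "degree (g2 (n'+1) :: 'a poly poly) \<le> (n'+1) div 2"
      proof -
        have "degree (smult [:-1 - of_nat n', 1:] (g2 n' :: 'a poly poly)) \<le> (n'+1) div 2"
          using ih1 degree_smult_le[of "[:-1 - of_nat n', 1:]" "g2 n' :: 'a poly poly"] by linarith
        moreover have "degree (pCons 0 (g2 (n'-1) :: 'a poly poly)) \<le> (n'+1) div 2"
          using ih2 n(2) by (cases "g2 (n'-1) = (0 :: 'a poly poly)") auto
        ultimately have "degree (smult [:-1 - of_nat n', 1:] (g2 n' :: 'a poly poly) + pCons 0 (g2 (n'-1))) \<le> (n'+1) div 2"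
          by (rule degree_add_le)
        then show ?thesis unfolding st using degree_smult_le order_trans by blast
      qed
      have cf: "coeff (g2 (n'+1) :: 'a poly poly) i = [:1 / of_nat (n'+1):] * ([:-1 - of_nat n', 1:] * coeff (g2 n') i
           + (if i = 0 then 0 else coeff (g2 (n'-1)) (i - 1)))" for i
        unfolding st by (cases i) simp_all
      have d2: "\<forall>i. degree (coeff (g2 (n'+1) :: 'a poly poly) i) \<le> n'+1"
      proof
        fix i
        have a: "degree ([:-1 - of_nat n', 1:] * coeff (g2 n' :: 'a poly poly) i) \<le> n' + 1"
          by (rule dmul[of _ 1 _ n']) (use ih1 in auto)
        have b: "degree (if i = 0 then 0 else coeff (g2 (n'-1) :: 'a poly poly) (i - 1)) \<le> n' + 1"
          using ih2 by (auto intro: order_trans)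
        have ab: "degree ([:-1 - of_nat n', 1:] * coeff (g2 n' :: 'a poly poly) i
           + (if i = 0 then 0 else coeff (g2 (n'-1)) (i - 1))) \<le> n' + 1" by (rule degree_add_le[OF a b])
        show "degree (coeff (g2 (n'+1) :: 'a poly poly) i) \<le> n'+1" unfolding cf
          by (rule dmul[OF _ ab, of _ 0]) auto
      qed
      have d3: "even (n'+1) \<longrightarrow> degree (coeff (g2 (n'+1) :: 'a poly poly) ((n'+1) div 2)) = 0"
      proof
        assume ev: "even (n'+1)"
        then obtain t where t: "n' = 2 * t + 1" by (metis even_Suc oddE Suc_eq_plus1)
        define i where "i = (n'+1) div 2"
        have i0: "i = t + 1" "(n'-1) div 2 = t" unfolding i_def t by simp_all
        have "degree (g2 n' :: 'a poly poly) < i" using ih1 unfolding i0 t by simp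
        then have z: "coeff (g2 n' :: 'a poly poly) i = 0" by (rule coeff_eq_0)
        have ev2: "even (n' - 1)" unfolding t by simp
        have "coeff (g2 (n'+1) :: 'a poly poly) i = [:1 / of_nat (n'+1):] * coeff (g2 (n'-1)) ((n'-1) div 2)"
          unfolding cf z using i0 by simp
        moreover have "degree (coeff (g2 (n'-1) :: 'a poly poly) ((n'-1) div 2)) = 0" using ih2 ev2 by blast
        ultimately show "degree (coeff (g2 (n'+1) :: 'a poly poly) ((n'+1) div 2)) = 0" unfolding i_def
          using dmul[of "[:1 / of_nat (n'+1):]" 0 "coeff (g2 (n'-1) :: 'a poly poly) ((n'-1) div 2)" 0 0] by simp
      qed
      show ?thesis using d1 d2 d3 unfolding n(1) by blast
    qed
  qed
qed


lemma poly_fbr2: "poly (fbr ivPP z m) x = fbr ivP (poly z x) m"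
  unfolding fbr_def ivPP_def by (simp add: poly_prod of_nat_poly)

lemma poly_Yc: "poly Yc t = [:0, 1:]" unfolding Yc_def by simp
lemma poly_uu: "poly uu t = t" unfolding uu_def by simp

lemma Cp_poly_g2:
  assumes p: "prime CHAR('a::field)"
  shows "(Cp :: 'a poly) = poly (g2 (CHAR('a) - 1)) tB"
proof -
  define P where "P = CHAR('a)"
  have P0: "0 < P" using p prime_gt_0_nat unfolding P_def by blast
  have w: "poly (Yc - uu - 1) tB = (monom 1 P - 1 :: 'a poly)"
  proof -
    have "poly (Yc - uu - 1) tB = [:0, 1:] - tB - (1 :: 'a poly)" by (simp add: poly_Yc poly_uu)
    also have "\<dots> = monom 1 P - 1" unfolding tB_def P_def by (simp add: monom_altdef)
    finally show ?thesis .
  qed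
  have "poly (g2 (P - 1)) tB = (\<Sum>i=0..P-1. poly (a2 i) tB * poly (e2 (P - 1 - i)) (tB :: 'a poly))"
    unfolding g2_def fps_mult_nth by (simp add: poly_sum)
  also have "\<dots> = (\<Sum>i=0..P-1. fbr ivP (monom 1 P - 1) i * (tB ^ (P - 1 - i) * ivP (P - 1 - i) :: 'a poly))"
  proof (rule sum.cong)
    fix i
    have "poly (a2 i) tB = (fbr ivP (monom 1 P - 1) i :: 'a poly)" unfolding a2_def poly_fbr2 w ..
    moreover have "poly (e2 (P - 1 - i)) tB = (tB ^ (P - 1 - i) * ivP (P - 1 - i) :: 'a poly)"
      unfolding e2_def ivPP_def uu_def by simp
    ultimately show "poly (a2 i) tB * poly (e2 (P - 1 - i)) tB = fbr ivP (monom 1 P - 1) i * (tB ^ (P - 1 - i) * ivP (P - 1 - i) :: 'a poly)"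
      by simp
  qed simp
  also have "\<dots> = (\<Sum>k=0..P-1. fbr ivP (monom 1 P - 1) (P - 1 - k) * (tB ^ k * ivP k))"
    by (subst sum.atLeastAtMost_rev) (rule sum.cong, use P0 in auto)
  also have "\<dots> = Cp" unfolding Cp_def P_def[symmetric] by (simp add: atLeast0AtMost algebra_simps)
  finally show ?thesis unfolding P_def ..
qed

lemma degree_tB: "prime CHAR('a::field) \<Longrightarrow> degree (tB :: 'a poly) \<le> CHAR('a)"
  unfolding tB_def
proof (rule degree_diff_le)
  assume "prime CHAR('a)"
  then show "degree (monom (1::'a) 1) \<le> CHAR('a)"
    using prime_gt_0_nat by (auto simp: degree_monom_eq Suc_leI)
qed (simp add: degree_monom_eq)

lemma degree_Cp:
  assumes p: "prime CHAR('a::field)" "odd CHAR('a)"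
  shows "degree (Cp :: 'a poly) \<le> CHAR('a) * ((CHAR('a) - 1) div 2)"
proof -
  define P where "P = CHAR('a)"
  define m where "m = (P - 1) div 2"
  define G :: "'a poly poly" where "G = g2 (P - 1)"
  have P0: "0 < P" using p prime_gt_0_nat unfolding P_def by blast
  have inv: "degree G \<le> m" "\<forall>i. degree (coeff G i) \<le> P - 1" "degree (coeff G m) = 0"
    using g2_inv[OF p(1), of "P - 1"] P0 p(2) unfolding G_def m_def P_def by auto
  have "degree (poly G tB) \<le> P * m"
    unfolding poly_altdef
  proof (rule degree_sum_le)
    fix i assume i: "i \<in> {..degree G}"
    have dt: "degree (tB ^ i :: 'a poly) \<le> P * i"
      using degree_power_le[of "tB :: 'a poly" i] degree_tB[where 'a='a, OF p(1)] unfolding P_def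
      by (metis mult_le_mono1 order_trans)
    show "degree (coeff G i * tB ^ i) \<le> P * m"
    proof (cases "i = m")
      case True
      show ?thesis by (rule dmul[of _ 0 _ "P * i"]) (use True inv dt in auto)
    next
      case False
      then have "i < m" using i inv(1) by auto
      then have "P * (i + 1) \<le> P * m" by (intro mult_le_mono2) simp
      then have le: "P - 1 + P * i \<le> P * m" by (simp add: algebra_simps)
      show ?thesis by (rule dmul[OF inv(2)[rule_format] dt le])
    qed
  qed (simp)
  then show ?thesis unfolding Cp_poly_g2[OF p(1)] G_def m_def P_def .
qed


lemma sum_P_minus:
  fixes P :: nat
  assumes "odd P"
  shows "(\<Sum>j\<in>{1..<P}. P - j) = P * ((P - 1) div 2)"
proof -
  have "(\<Sum>j\<in>{1..<P}. P - j) = (\<Sum>j\<in>{1..<P}. j)"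
    by (rule sum.reindex_bij_witness[of _ "\<lambda>j. P - j" "\<lambda>j. P - j"]) auto
  also have "{1..<P} = {Suc 0..P-1}" using assms by (cases P) auto
  then have "(\<Sum>j\<in>{1..<P}. j) = (\<Sum>j=Suc 0..P-1. j)" by simp
  also have "\<dots> = (P - 1) * (P - 1 + 1) div 2" using gauss_sum_from_Suc_0[of "P - 1", where 'a=nat] by simp
  also have "\<dots> = P * ((P - 1) div 2)" using assms by (cases P) (auto elim!: oddE)
  finally show ?thesis .
qed

lemma degree_Dpoly:
  assumes p: "prime CHAR('a::field)" "odd CHAR('a)"
  shows "degree (Dpoly :: 'a poly) = CHAR('a) * ((CHAR('a) - 1) div 2)"
proof -
  have "degree (Dpoly :: 'a poly) = (\<Sum>j\<in>{1..<CHAR('a)}. degree (Lj j ^ (CHAR('a) - j) :: 'a poly))"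
    unfolding Dpoly_def by (rule degree_prod_eq_sum_degree) (auto simp: Lj_def)
  also have "\<dots> = (\<Sum>j\<in>{1..<CHAR('a)}. CHAR('a) - j)"
    unfolding Lj_def by (simp add: degree_linear_power)
  finally show ?thesis using sum_P_minus[OF p(2)] by simp
qed

lemma lgen_zero:
  assumes p: "prime CHAR('a::field)" "odd CHAR('a)"
  shows "lgen (0::'a) = 1"
proof -
  define P where "P = CHAR('a)"
  have P0: "0 < P" using p prime_gt_0_nat unfolding P_def by blast
  have "lgen (0::'a) = (\<Sum>k\<le>P-1. if k = 0 then fbinom (-1::'a) (P - 1) else 0)"
    unfolding lgen_def P_def[symmetric] using P0 by (intro sum.cong) (auto simp: power_0_left)
  also have "\<dots> = fbinom (-1::'a) (P - 1)" by (simp add: sum.delta)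
  also have "\<dots> = (-1) ^ (P - 1)" using fbinom_minus_one[OF p(1)] P0 unfolding P_def by simp
  also have "\<dots> = 1" using p P0 unfolding P_def by (simp add: neg_one_even_power)
  finally show ?thesis .
qed

lemma lgen_closed:
  assumes p: "prime CHAR('a::field)" "odd CHAR('a)"
  shows "lgen (x::'a) = (\<Prod>j\<in>{1..<CHAR('a)}. (1 - x / of_nat j) ^ (CHAR('a) - j))"
proof -
  have C0: "poly (Cp :: 'a poly) 0 = 1" using lgen_zero[OF p] by (simp add: poly_Cp)
  have dg: "degree (Cp :: 'a poly) \<le> degree (Dpoly :: 'a poly)" using degree_Cp[OF p] degree_Dpoly[OF p] by simp
  have "lgen x = poly Cp x" by (simp add: poly_Cp)
  also have "\<dots> = poly Dpoly x / poly Dpoly 0" by (rule dvd_deg_normalize[OF D_dvd_Cp[OF p] C0 dg])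
  also have "\<dots> = (\<Prod>j\<in>{1..<CHAR('a)}. (x - of_nat j) ^ (CHAR('a) - j)) / (\<Prod>j\<in>{1..<CHAR('a)}. (- of_nat j) ^ (CHAR('a) - j))"
    unfolding Dpoly_def Lj_def by (simp add: poly_prod)
  also have "\<dots> = (\<Prod>j\<in>{1..<CHAR('a)}. (x - of_nat j) ^ (CHAR('a) - j) / (- of_nat j) ^ (CHAR('a) - j))"
    by (rule prod_dividef[symmetric])
  also have "\<dots> = (\<Prod>j\<in>{1..<CHAR('a)}. (1 - x / of_nat j) ^ (CHAR('a) - j))"
  proof (rule prod.cong)
    fix j assume "j \<in> {1..<CHAR('a)}"
    then have nz: "(of_nat j :: 'a) \<noteq> 0" using char_of_nat_nz[where 'a='a, of j] by auto
    have "(x - of_nat j) ^ (CHAR('a) - j) / (- of_nat j) ^ (CHAR('a) - j) = ((x - of_nat j) / (- of_nat j)) ^ (CHAR('a) - j)"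
      by (rule power_divide[symmetric])
    also have "(x - of_nat j) / (- of_nat j) = 1 - x / of_nat j" using nz by (simp add: field_simps)
    finally show "(x - of_nat j) ^ (CHAR('a) - j) / (- of_nat j) ^ (CHAR('a) - j) = (1 - x / of_nat j) ^ (CHAR('a) - j)" .
  qed simp
  finally show ?thesis .
qed


section \<open>Part C: combinatorics of exponents\<close>

lemma jset_iff:
  fixes p s i :: nat
  assumes "0 < i" "i < p"
  shows "(i + (s * i) mod p < p) \<longleftrightarrow> ((s + 1) * i) div p = (s * i) div p"
proof -
  have "(s + 1) * i = s * i + i" by simp
  moreover have "(s * i + i) div p = (s * i) div p + i div p + ((s * i) mod p + i mod p) div p"
    by (rule div_add1_eq)
  ultimately have "((s + 1) * i) div p = (s * i) div p + ((s * i) mod p + i) div p"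
    using assms by (simp add: ac_simps)
  moreover have "((s * i) mod p + i) div p = 0 \<longleftrightarrow> (s * i) mod p + i < p"
    using assms by (auto simp: div_eq_0_iff)
  ultimately show ?thesis by (simp add: add.commute)
qed

lemma div_step_le:
  fixes p s i :: nat
  assumes "0 < i" "i < p"
  shows "((s + 1) * i) div p \<le> (s * i) div p + 1" and "(s * i) div p \<le> ((s + 1) * i) div p"
proof -
  have "(s + 1) * i = s * i + i" by simp
  moreover have "(s * i + i) div p = (s * i) div p + i div p + ((s * i) mod p + i mod p) div p"
    by (rule div_add1_eq)
  ultimately have "((s + 1) * i) div p = (s * i) div p + ((s * i) mod p + i) div p"
    using assms by (simp add: ac_simps)
  moreover have "((s * i) mod p + i) div p \<le> 1"
  proof -
    have "(s * i) mod p + i < 2 * p" using assms mod_less_divisor[of p "s * i"] by linarith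
    then have "((s * i) mod p + i) div p < 2" by (rule less_mult_imp_div_less)
    then show ?thesis by simp
  qed
  ultimately show "((s + 1) * i) div p \<le> (s * i) div p + 1" "(s * i) div p \<le> ((s + 1) * i) div p" by auto
qed

lemma ecount:
  fixes p i k :: nat
  assumes "0 < i" "i < p" "0 < k"
  shows "card {s\<in>{1..k-1}. i + (s * i) mod p < p} + (k * i) div p = k - 1"
  using assms(3)
proof (induction k rule: nat_induct_non_zero)
  case 1 then show ?case using assms by simp
next
  case (Suc k)
  have S: "{s\<in>{1..Suc k - 1}. i + (s * i) mod p < p}
      = (if i + (k * i) mod p < p then insert k {s\<in>{1..k-1}. i + (s * i) mod p < p} else {s\<in>{1..k-1}. i + (s * i) mod p < p})"
  proof -
    have I: "{1..Suc k - 1} = insert k {1..k-1}" using Suc.hyps by auto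
    show ?thesis unfolding I by auto
  qed
  have fin: "finite {s\<in>{1..k-1}. i + (s * i) mod p < p}" by simp
  have nk: "k \<notin> {s\<in>{1..k-1}. i + (s * i) mod p < p}" by auto
  note st = div_step_le[OF assms(1,2), of k]
  show ?case
  proof (cases "i + (k * i) mod p < p")
    case True
    then have "((k + 1) * i) div p = (k * i) div p" using jset_iff[OF assms(1,2)] by blast
    then show ?thesis unfolding S using True Suc.IH Suc.hyps card_insert_disjoint[OF fin nk] by simp
  next
    case False
    then have "((k + 1) * i) div p \<noteq> (k * i) div p" using jset_iff[OF assms(1,2)] by blast
    then have "((k + 1) * i) div p = (k * i) div p + 1" using st by linarith
    then show ?thesis unfolding S using False Suc.IH Suc.hyps by simp
  qed
qed

lemma div_lt_self:
  fixes p i k :: nat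
  assumes "0 < k" "i < p"
  shows "(k * i) div p < k"
proof -
  have "k * i < k * p" using assms by simp
  then show ?thesis by (simp add: div_less_iff_less_mult mult.commute)
qed

lemma exp_identity:
  fixes p h k i :: nat
  assumes "prime p" "0 < h" "h < p" "0 < k" "k < p" "0 < i" "i < p"
  defines "q \<equiv> (h * k) div p" and "r \<equiv> (h * k) mod p"
  shows "q * (p - i) + (r - 1 - (r * i) div p)
       = (k - 1 - (k * ((h * i) mod p)) div p) + k * (h - 1 - (h * i) div p)"
proof -
  define A where "A = (h * i) div p"
  define B where "B = (h * i) mod p"
  define C where "C = (k * B) div p"
  define D where "D = (k * B) mod p"
  define X where "X = (r * i) div p"
  have p0: "0 < p" using assms by simp
  have E1: "h * i = A * p + B" unfolding A_def B_def by simp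
  have E2: "k * B = C * p + D" unfolding C_def D_def by simp
  have E3: "h * k = q * p + r" unfolding q_def r_def by simp
  have Dp: "D < p" unfolding D_def using p0 by simp
  have rp: "r < p" unfolding r_def using p0 by simp
  have "\<not> p dvd h * k" using assms by (auto simp: prime_dvd_mult_iff dest: dvd_imp_le)
  then have r0: "0 < r" unfolding r_def by (simp add: dvd_eq_mod_eq_0)
  have Bp: "B < p" unfolding B_def using p0 by simp
  have Ah: "A < h" unfolding A_def using div_lt_self[OF assms(2) assms(7)] .
  have Ck: "C < k" unfolding C_def using div_lt_self[OF assms(4) Bp] .
  have Xr: "X < r" unfolding X_def using div_lt_self[OF r0 assms(7)] .
  have iE: "int (r * i) = (int k * int A + int C - int q * int i) * int p + int D"
  proof -
    have e3: "int r * int i = int h * int k * int i - int q * int p * int i"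
      using arg_cong[OF E3, of "\<lambda>x. int x * int i"] by (simp add: algebra_simps)
    have e1: "int h * int i = int A * int p + int B" using arg_cong[OF E1, of int] by simp
    have e2: "int k * int B = int C * int p + int D" using arg_cong[OF E2, of int] by simp
    have "int h * int k * int i = int k * (int h * int i)" by (simp add: algebra_simps)
    also have "\<dots> = int k * int A * int p + int k * int B" unfolding e1 by (simp add: algebra_simps)
    also have "\<dots> = int k * int A * int p + int C * int p + int D" unfolding e2 by simp
    finally have "int h * int k * int i = int k * int A * int p + int C * int p + int D" .
    then show ?thesis using e3 by (simp add: algebra_simps)
  qed
  have Xe: "int X = int k * int A + int C - int q * int i"
  proof -
    have "int X = int (r * i) div int p" unfolding X_def by (simp add: zdiv_int)
    also have "\<dots> = (int D + (int k * int A + int C - int q * int i) * int p) div int p" unfolding iE by (simp add: add.commute)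
    also have "\<dots> = int D div int p + (int k * int A + int C - int q * int i)" using p0 by simp
    also have "int D div int p = 0" using Dp by simp
    finally show ?thesis by simp
  qed
  have L: "int (q * (p - i) + (r - 1 - X)) = int q * (int p - int i) + (int r - 1 - int X)"
  proof -
    have "int (q * (p - i)) = int q * (int p - int i)" using assms(7) by (simp add: of_nat_diff)
    moreover have "int (r - 1 - X) = int r - 1 - int X" using Xr by (simp add: of_nat_diff)
    ultimately show ?thesis by simp
  qed
  have R: "int ((k - 1 - C) + k * (h - 1 - A)) = (int k - 1 - int C) + int k * (int h - 1 - int A)"
  proof -
    have "int (k - 1 - C) = int k - 1 - int C" using Ck by (simp add: of_nat_diff)
    moreover have "int (h - 1 - A) = int h - 1 - int A" using Ah by (simp add: of_nat_diff)
    ultimately show ?thesis by simp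
  qed
  have E3i: "int h * int k = int q * int p + int r" using arg_cong[OF E3, of int] by simp
  have "int (q * (p - i) + (r - 1 - X)) = int ((k - 1 - C) + k * (h - 1 - A))"
    unfolding L R Xe using E3i by (simp add: algebra_simps)
  then show ?thesis unfolding X_def C_def B_def A_def by (simp only: of_nat_eq_iff)
qed


section \<open>Part C: product identities\<close>

lemma prod_swap_count:
  assumes "finite S" "finite I" "\<forall>s\<in>S. J s \<subseteq> I"
  shows "(\<Prod>s\<in>S. \<Prod>i\<in>J s. f i) = (\<Prod>i\<in>I. (f i :: 'a::comm_monoid_mult) ^ card {s\<in>S. i \<in> J s})"
proof -
  have "(\<Prod>s\<in>S. \<Prod>i\<in>J s. f i) = (\<Prod>s\<in>S. \<Prod>i\<in>I. if i \<in> J s then f i else 1)"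
  proof (rule prod.cong)
    fix s assume "s \<in> S"
    then have "{i\<in>I. i \<in> J s} = J s" using assms(3) by auto
    then show "(\<Prod>i\<in>J s. f i) = (\<Prod>i\<in>I. if i \<in> J s then f i else 1)"
      using prod.inter_filter[OF assms(2), of f "\<lambda>i. i \<in> J s"] by simp
  qed simp
  also have "\<dots> = (\<Prod>i\<in>I. \<Prod>s\<in>S. if i \<in> J s then f i else 1)" by (rule prod.swap)
  also have "\<dots> = (\<Prod>i\<in>I. f i ^ card {s\<in>S. i \<in> J s})"
  proof (rule prod.cong)
    fix i assume "i \<in> I"
    show "(\<Prod>s\<in>S. if i \<in> J s then f i else 1) = f i ^ card {s\<in>S. i \<in> J s}"
      using prod.inter_filter[OF assms(1), of "\<lambda>_. f i" "\<lambda>s. i \<in> J s"] by simp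
  qed simp
  finally show ?thesis .
qed

definition prodP :: "nat \<Rightarrow> 'a::field \<Rightarrow> 'a" where
  "prodP k \<gamma> = (\<Prod>s=1..k-1. bgen s \<gamma>)"

lemma prodP_closed:
  assumes p: "prime CHAR('a::field)" "odd CHAR('a)" and k: "0 < k" "k < CHAR('a)"
  shows "prodP k (\<gamma>::'a) = (\<Prod>i\<in>{1..<CHAR('a)}. (1 - \<gamma> / of_nat i) ^ (k - 1 - (k * i) div CHAR('a)))"
proof -
  define P where "P = CHAR('a)"
  have "prodP k \<gamma> = (\<Prod>s\<in>{1..k-1}. \<Prod>i\<in>Jset P s. 1 - \<gamma> / of_nat i)"
    unfolding prodP_def P_def by (rule prod.cong) (use p k in \<open>auto intro!: bgen_closed\<close>)
  also have "\<dots> = (\<Prod>i\<in>{1..<P}. (1 - \<gamma> / of_nat i) ^ card {s\<in>{1..k-1}. i \<in> Jset P s})"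
    by (rule prod_swap_count) (auto simp: Jset_def)
  also have "\<dots> = (\<Prod>i\<in>{1..<P}. (1 - \<gamma> / of_nat i) ^ (k - 1 - (k * i) div P))"
  proof (rule prod.cong)
    fix i assume i: "i \<in> {1..<P}"
    have "card {s\<in>{1..k-1}. i \<in> Jset P s} = card {s\<in>{1..k-1}. i + (s * i) mod P < P}"
      using i unfolding Jset_def by simp
    then have "card {s\<in>{1..k-1}. i \<in> Jset P s} = k - 1 - (k * i) div P"
      using ecount[of i P k] i k by simp
    then show "(1 - \<gamma> / of_nat i) ^ card {s\<in>{1..k-1}. i \<in> Jset P s} = (1 - \<gamma> / of_nat i) ^ (k - 1 - (k * i) div P)"
      by simp
  qed simp
  finally show ?thesis unfolding P_def .
qed

lemma reindex_h:
  assumes p: "prime CHAR('a::field)" and h: "0 < h" "h < CHAR('a)"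
  shows "(\<Prod>i\<in>{1..<CHAR('a)}. (1 - (of_nat h * \<gamma>) / of_nat i) ^ E i)
       = (\<Prod>i\<in>{1..<CHAR('a)}. (1 - (\<gamma>::'a) / of_nat i) ^ E ((h * i) mod CHAR('a)))"
proof -
  define P where "P = CHAR('a)"
  define \<sigma> where "\<sigma> i = (h * i) mod P" for i
  have hz: "(of_nat h :: 'a) \<noteq> 0" using char_of_nat_nz[where 'a='a, of h] h by simp
  have of\<sigma>: "(of_nat (\<sigma> i) :: 'a) = of_nat h * of_nat i" for i
    unfolding \<sigma>_def P_def by (simp add: char_of_nat_mod)
  have inj: "inj_on \<sigma> {1..<P}"
  proof (rule inj_onI)
    fix x y assume xy: "x \<in> {1..<P}" "y \<in> {1..<P}" "\<sigma> x = \<sigma> y"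
    then have "(of_nat h * of_nat x :: 'a) = of_nat h * of_nat y" using of\<sigma> by metis
    then have "(of_nat x :: 'a) = of_nat y" using hz by simp
    then show "x = y" using char_of_nat_inj[where 'a='a, of x y] xy unfolding P_def by auto
  qed
  have sub: "\<sigma> ` {1..<P} \<subseteq> {1..<P}"
  proof
    fix y assume "y \<in> \<sigma> ` {1..<P}"
    then obtain x where x: "x \<in> {1..<P}" "y = \<sigma> x" by auto
    have "\<not> P dvd h * x" using p h x unfolding P_def by (auto simp: prime_dvd_mult_iff dest: dvd_imp_le)
    then have "y \<noteq> 0" unfolding x \<sigma>_def by (simp add: dvd_eq_mod_eq_0)
    moreover have "y < P" unfolding x \<sigma>_def using p prime_gt_0_nat unfolding P_def by simp
    ultimately show "y \<in> {1..<P}" by auto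
  qed
  have bij: "bij_betw \<sigma> {1..<P} {1..<P}"
    unfolding bij_betw_def using inj endo_inj_surj[OF _ sub inj] by simp
  have "(\<Prod>i\<in>{1..<P}. (1 - (of_nat h * \<gamma>) / of_nat i) ^ E i)
      = (\<Prod>i\<in>{1..<P}. (1 - (of_nat h * \<gamma>) / of_nat (\<sigma> i)) ^ E (\<sigma> i))"
    by (rule prod.reindex_bij_betw[OF bij, symmetric])
  also have "\<dots> = (\<Prod>i\<in>{1..<P}. (1 - \<gamma> / of_nat i) ^ E (\<sigma> i))"
    unfolding of\<sigma> using hz by (intro prod.cong) simp_all
  finally show ?thesis unfolding P_def \<sigma>_def .
qed


lemma prod_pow_combine:
  "(\<Prod>i\<in>I. a i ^ m i) ^ q * (\<Prod>i\<in>I. a i ^ n i) = (\<Prod>i\<in>I. (a i :: 'a::comm_ring_1) ^ (m i * q + n i))"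
proof -
  have "(\<Prod>i\<in>I. a i ^ m i) ^ q = (\<Prod>i\<in>I. (a i ^ m i) ^ q)" by (rule prod_power_distrib)
  also have "\<dots> = (\<Prod>i\<in>I. a i ^ (m i * q))" by (simp only: power_mult)
  finally have "(\<Prod>i\<in>I. a i ^ m i) ^ q * (\<Prod>i\<in>I. a i ^ n i) = (\<Prod>i\<in>I. a i ^ (m i * q) * a i ^ n i)"
    by (simp only: prod.distrib)
  then show ?thesis by (simp only: power_add)
qed

lemma main_identity:
  assumes p: "prime CHAR('a::field)" "odd CHAR('a)" and h: "0 < h" "h < CHAR('a)" and k: "0 < k" "k < CHAR('a)"
  shows "lgen \<alpha> ^ ((h * k) div CHAR('a)) * prodP ((h * k) mod CHAR('a)) \<alpha>
       = prodP k (of_nat h * \<alpha>) * prodP h (\<alpha>::'a) ^ k"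
proof -
  define P where "P = CHAR('a)"
  define q where "q = (h * k) div P"
  define r where "r = (h * k) mod P"
  define l where "l i = 1 - \<alpha> / of_nat i" for i
  have "\<not> P dvd h * k" using p h k unfolding P_def by (auto simp: prime_dvd_mult_iff dest: dvd_imp_le)
  then have r0: "0 < r" unfolding r_def by (simp add: dvd_eq_mod_eq_0)
  have rP: "r < P" unfolding r_def using p prime_gt_0_nat unfolding P_def by simp
  have "lgen \<alpha> ^ q * prodP r \<alpha> = (\<Prod>i\<in>{1..<P}. l i ^ (P - i)) ^ q * (\<Prod>i\<in>{1..<P}. l i ^ (r - 1 - (r * i) div P))"
    unfolding lgen_closed[OF p] prodP_closed[OF p r0 rP[unfolded P_def]] l_def P_def ..
  also have "\<dots> = (\<Prod>i\<in>{1..<P}. l i ^ ((P - i) * q + (r - 1 - (r * i) div P)))"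
    by (rule prod_pow_combine)
  also have "\<dots> = (\<Prod>i\<in>{1..<P}. l i ^ ((h - 1 - (h * i) div P) * k + (k - 1 - (k * ((h * i) mod P)) div P)))"
  proof (rule prod.cong)
    fix i assume "i \<in> {1..<P}"
    then have "q * (P - i) + (r - 1 - (r * i) div P) = (k - 1 - (k * ((h * i) mod P)) div P) + k * (h - 1 - (h * i) div P)"
      using exp_identity[of P h k i] p h k unfolding q_def r_def P_def by auto
    then show "l i ^ ((P - i) * q + (r - 1 - (r * i) div P)) = l i ^ ((h - 1 - (h * i) div P) * k + (k - 1 - (k * ((h * i) mod P)) div P))"
      by (simp add: mult.commute add.commute)
  qed simp
  also have "\<dots> = (\<Prod>i\<in>{1..<P}. l i ^ (h - 1 - (h * i) div P)) ^ k * (\<Prod>i\<in>{1..<P}. l i ^ (k - 1 - (k * ((h * i) mod P)) div P))"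
    by (rule prod_pow_combine[symmetric])
  also have "(\<Prod>i\<in>{1..<P}. l i ^ (k - 1 - (k * ((h * i) mod P)) div P)) = prodP k (of_nat h * \<alpha>)"
    unfolding prodP_closed[OF p k] reindex_h[OF p(1) h] l_def P_def ..
  also have "(\<Prod>i\<in>{1..<P}. l i ^ (h - 1 - (h * i) div P)) = prodP h \<alpha>"
    unfolding prodP_closed[OF p h] l_def P_def ..
  finally show ?thesis unfolding q_def r_def P_def by (simp add: mult.commute)
qed


lemma bij_mult_mod:
  fixes p h :: nat
  assumes "prime p" "0 < h" "h < p"
  shows "bij_betw (\<lambda>i. (h * i) mod p) {1..<p} {1..<p}"
proof -
  have cop: "coprime h p" using assms by (metis prime_imp_coprime coprime_commute dvd_imp_le not_le)
  have inj: "inj_on (\<lambda>i. (h * i) mod p) {1..<p}"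
  proof (rule inj_onI)
    fix x y assume xy: "x \<in> {1..<p}" "y \<in> {1..<p}" "(h * x) mod p = (h * y) mod p"
    then have "[h * x = h * y] (mod p)" by (simp add: cong_def)
    then have "[x = y] (mod p)" using cong_mult_lcancel_nat[OF cop] by simp
    then show "x = y" using xy by (simp add: cong_def)
  qed
  have sub: "(\<lambda>i. (h * i) mod p) ` {1..<p} \<subseteq> {1..<p}"
  proof
    fix y assume "y \<in> (\<lambda>i. (h * i) mod p) ` {1..<p}"
    then obtain x where x: "x \<in> {1..<p}" "y = (h * x) mod p" by auto
    have "\<not> p dvd h * x" using assms x by (auto simp: prime_dvd_mult_iff dest: dvd_imp_le)
    then have "y \<noteq> 0" unfolding x by (simp add: dvd_eq_mod_eq_0)
    moreover have "y < p" unfolding x using assms prime_gt_0_nat by simp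
    ultimately show "y \<in> {1..<p}" by auto
  qed
  show ?thesis unfolding bij_betw_def using inj endo_inj_surj[OF _ sub inj] by simp
qed

lemma pcompose_monom_gen: "pcompose (monom a n) q = smult a (q ^ n)"
  by (simp add: monom_altdef pcompose_smult pcompose_hom.hom_power pcompose_pCons)

lemma of_nat_fract_to: "(of_nat n :: 'a::idom fract) = to_fract (of_nat n)"
  by (induction n) simp_all

lemma CHAR_ratfun: "CHAR('p::prime_card ratfun) = CARD('p)"
proof (rule CHAR_eqI)
  show "(of_nat CARD('p) :: 'p ratfun) = 0"
    unfolding of_nat_fract_to by (simp add: of_nat_poly)
  fix x assume "(of_nat x :: 'p ratfun) = 0"
  then have "(of_nat x :: 'p mod_ring poly) = 0" unfolding of_nat_fract_to by simp
  then have "(of_nat x :: 'p mod_ring) = 0" by (simp add: of_nat_poly)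
  then show "CARD('p) dvd x" using of_nat_eq_0_iff_char_dvd[where 'a="'p mod_ring"] by simp
qed

lemma alpha_ne: "(alpha :: 'p::prime_card ratfun) \<noteq> of_nat i"
proof
  assume "(alpha :: 'p ratfun) = of_nat i"
  then have "[:0, 1:] = (of_nat i :: 'p mod_ring poly)" unfolding alpha_def of_nat_fract_to by simp
  then show False by (simp add: of_nat_poly)
qed


lemma brs_bgen: "b_rs 1 s (\<gamma> :: 'p::prime_card ratfun) = bgen s \<gamma>"
  unfolding b_rs_def bgen_def Let_def CHAR_ratfun by simp

lemma laguerre_lgen: "laguerre (\<alpha> ^ CARD('p)) (\<alpha> ^ CARD('p) - \<alpha>) = lgen (\<alpha> :: 'p::prime_card ratfun)"
  unfolding laguerre_def lgen_def Let_def CHAR_ratfun by simp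

lemma prod_brs: "(\<Prod>s=1..k-1. b_rs 1 s (\<gamma> :: 'p::prime_card ratfun)) = prodP k \<gamma>"
  unfolding prodP_def brs_bgen ..

lemma G_poly_eq: "G_poly (\<gamma> :: 'p::prime_card ratfun) = - (\<Sum>k\<in>{1..<CARD('p)}. monom (1 / (of_nat k * prodP k \<gamma>)) k)"
proof -
  have "{1..CARD('p) - 1} = {1..<CARD('p)}" using prime_card[where 'a='p] prime_gt_0_nat by auto
  then show ?thesis unfolding G_poly_def prod_brs by simp
qed

lemma prod_nz: "finite A \<Longrightarrow> (\<And>i. i \<in> A \<Longrightarrow> f i \<noteq> 0) \<Longrightarrow> prod f A \<noteq> (0 :: 'a::field)"
  by (simp add: prod_zero_iff)

lemma lin_alpha_nz:
  assumes "0 < i" "i < CARD('p::prime_card)"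
  shows "1 - (alpha :: 'p ratfun) / of_nat i \<noteq> 0"
proof
  have nz: "(of_nat i :: 'p ratfun) \<noteq> 0" using char_of_nat_nz[where 'a="'p ratfun", of i] assms CHAR_ratfun[where 'p='p] by simp
  assume "1 - (alpha :: 'p ratfun) / of_nat i = 0"
  then have "alpha = (of_nat i :: 'p ratfun)" using nz by (simp add: field_simps)
  then show False using alpha_ne by blast
qed

lemma prodP_alpha_nz:
  assumes "odd CARD('p::prime_card)" "0 < k" "k < CARD('p)" "0 < h" "h < CARD('p)"
  shows "prodP k (of_nat h * (alpha :: 'p ratfun)) \<noteq> 0"
proof -
  have p: "prime CHAR('p ratfun)" "odd CHAR('p ratfun)" using assms(1) prime_card[where 'a='p] by (simp_all add: CHAR_ratfun)
  have "prodP k (of_nat h * (alpha :: 'p ratfun)) = (\<Prod>i\<in>{1..<CARD('p)}. (1 - alpha / of_nat i) ^ (k - 1 - (k * ((h * i) mod CARD('p))) div CARD('p)))"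
    using prodP_closed[OF p, of k] reindex_h[OF p(1), of h] assms by (simp add: CHAR_ratfun)
  also have "\<dots> \<noteq> 0"
  proof (rule prod_nz)
    fix i assume "i \<in> {1..<CARD('p)}"
    then show "(1 - alpha / of_nat i) ^ (k - 1 - (k * ((h * i) mod CARD('p))) div CARD('p)) \<noteq> (0 :: 'p ratfun)"
      by (intro power_not_zero lin_alpha_nz) auto
  qed simp
  finally show ?thesis .
qed

lemma lgen_alpha_nz:
  assumes "odd CARD('p::prime_card)"
  shows "lgen (alpha :: 'p ratfun) \<noteq> 0"
proof -
  have p: "prime CHAR('p ratfun)" "odd CHAR('p ratfun)" using assms(1) prime_card[where 'a='p] by (simp_all add: CHAR_ratfun)
  show ?thesis unfolding lgen_closed[OF p] CHAR_ratfun
  proof (rule prod_nz)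
    fix i assume "i \<in> {1..<CARD('p)}"
    then show "(1 - alpha / of_nat i) ^ (CARD('p) - i) \<noteq> (0 :: 'p ratfun)"
      by (intro power_not_zero lin_alpha_nz) auto
  qed simp
qed


lemma smult_sum_gen: "smult a (sum f A) = (\<Sum>x\<in>A. smult a (f x))"
  by (induction A rule: infinite_finite_induct) (simp_all add: smult_add_right)

lemma term_dvd:
  fixes A c :: "'a::field"
  shows "monom 1 P - [:c:] dvd monom A (r + P * q) - monom (A * c ^ q) r"
proof -
  have e1: "monom A (r + P * q) = monom A r * (monom 1 P) ^ q" by (simp add: mult_monom monom_power)
  have e2: "monom (A * c ^ q) r = monom A r * [:c:] ^ q"
    by (simp add: poly_const_pow smult_monom mult.commute)
  have "monom A (r + P * q) - monom (A * c ^ q) r = monom A r * ((monom 1 P) ^ q - [:c:] ^ q)"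
    unfolding e1 e2 by (simp add: algebra_simps)
  moreover have "monom 1 P - [:c:] dvd (monom 1 P) ^ q - [:c:] ^ q" by (rule power_diff_dvd)
  ultimately show ?thesis by simp
qed

theorem theorem8:
  fixes h :: nat
  assumes "odd (CARD('p::prime_card))"
    and "0 < h" and "h < CARD('p)"
  shows "let p = CARD('p);
             \<alpha> = (alpha :: 'p ratfun);
             M = monom 1 p - [: laguerre (\<alpha> ^ p) (\<alpha> ^ p - \<alpha>) :];
             Y = monom (1 / (\<Prod>s=1..h-1. b_rs 1 s \<alpha>)) h
         in pcompose (G_poly (of_nat h * \<alpha>)) Y mod M = (smult (of_nat h) (G_poly \<alpha>)) mod M"
proof -
  define P where "P = CARD('p)"
  have pr: "prime CHAR('p ratfun)" "odd CHAR('p ratfun)" using assms(1) prime_card[where 'a='p] by (simp_all add: CHAR_ratfun)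
  have P0: "0 < P" unfolding P_def using prime_card[where 'a='p] prime_gt_0_nat by blast
  define \<alpha> :: "'p ratfun" where "\<alpha> = alpha"
  define c where "c = lgen \<alpha>"
  define d where "d = 1 / prodP h \<alpha>"
  define M where "M = monom 1 P - [:c:]"
  define \<sigma> where "\<sigma> k = (h * k) mod P" for k
  have cnz: "c \<noteq> 0" unfolding c_def \<alpha>_def using lgen_alpha_nz[OF assms(1)] .
  have Pnz: "\<And>k g. 0 < k \<Longrightarrow> k < P \<Longrightarrow> 0 < g \<Longrightarrow> g < P \<Longrightarrow> prodP k (of_nat g * \<alpha>) \<noteq> 0"
    unfolding \<alpha>_def P_def using prodP_alpha_nz[OF assms(1)] by blast
  have Pnz1: "\<And>k. 0 < k \<Longrightarrow> k < P \<Longrightarrow> prodP k \<alpha> \<noteq> 0" using Pnz[of _ 1] P0 by (metis of_nat_1 mult_1 less_one not_less_eq less_Suc_eq)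
  have ofnz: "\<And>k. 0 < k \<Longrightarrow> k < P \<Longrightarrow> (of_nat k :: 'p ratfun) \<noteq> 0"
    using char_of_nat_nz[where 'a="'p ratfun"] CHAR_ratfun[where 'p='p] unfolding P_def by simp
  have bij: "bij_betw \<sigma> {1..<P} {1..<P}" unfolding \<sigma>_def P_def using bij_mult_mod prime_card[where 'a='p] assms(2,3) by blast
  have L: "pcompose (G_poly (of_nat h * \<alpha>)) (monom d h)
      = - (\<Sum>k\<in>{1..<P}. monom (1 / (of_nat k * prodP k (of_nat h * \<alpha>)) * d ^ k) (h * k))"
    unfolding G_poly_eq P_def by (simp add: pcompose_sum pcompose_uminus pcompose_monom_gen monom_power smult_monom mult.commute)
  have "smult (of_nat h) (G_poly \<alpha>) = - (\<Sum>r\<in>{1..<P}. monom (of_nat h / (of_nat r * prodP r \<alpha>)) r)"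
    unfolding G_poly_eq P_def by (simp add: smult_sum_gen smult_monom)
  also have "(\<Sum>r\<in>{1..<P}. monom (of_nat h / (of_nat r * prodP r \<alpha>)) r)
      = (\<Sum>k\<in>{1..<P}. monom (of_nat h / (of_nat (\<sigma> k) * prodP (\<sigma> k) \<alpha>)) (\<sigma> k))"
    by (rule sum.reindex_bij_betw[OF bij, symmetric])
  finally have R: "smult (of_nat h) (G_poly \<alpha>) = - (\<Sum>k\<in>{1..<P}. monom (of_nat h / (of_nat (\<sigma> k) * prodP (\<sigma> k) \<alpha>)) (\<sigma> k))" .
  have key: "M dvd monom (1 / (of_nat k * prodP k (of_nat h * \<alpha>)) * d ^ k) (h * k)
        - monom (of_nat h / (of_nat (\<sigma> k) * prodP (\<sigma> k) \<alpha>)) (\<sigma> k)" if k: "k \<in> {1..<P}" for k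
  proof -
    define q where "q = (h * k) div P"
    define A where "A = 1 / (of_nat k * prodP k (of_nat h * \<alpha>)) * d ^ k"
    have hk: "h * k = \<sigma> k + P * q" unfolding \<sigma>_def q_def by simp
    have k0: "0 < k" "k < P" using k by auto
    have "\<not> P dvd h * k" using k0 assms(2,3) prime_card[where 'a='p] unfolding P_def
      by (auto simp: prime_dvd_mult_iff dest: dvd_imp_le)
    then have r0: "0 < \<sigma> k" unfolding \<sigma>_def by (simp add: dvd_eq_mod_eq_0)
    have rP: "\<sigma> k < P" unfolding \<sigma>_def using P0 by simp
    have MI: "c ^ q * prodP (\<sigma> k) \<alpha> = prodP k (of_nat h * \<alpha>) * prodP h \<alpha> ^ k"
      using main_identity[OF pr, of h k \<alpha>] assms(2,3) k0 unfolding c_def q_def \<sigma>_def P_def CHAR_ratfun by simp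
    have ofr: "(of_nat (\<sigma> k) :: 'p ratfun) = of_nat h * of_nat k"
      unfolding \<sigma>_def P_def using char_of_nat_mod[where 'a="'p ratfun", of "h * k"] CHAR_ratfun[where 'p='p] by simp
    have nz1: "prodP k (of_nat h * \<alpha>) \<noteq> 0" using Pnz k0 assms(2,3) unfolding P_def by simp
    have nz2: "prodP h \<alpha> \<noteq> 0" using Pnz1 assms(2,3) unfolding P_def by simp
    have nz3: "prodP (\<sigma> k) \<alpha> \<noteq> 0" using Pnz1 r0 rP by simp
    have nzk: "(of_nat k :: 'p ratfun) \<noteq> 0" using ofnz k0 by simp
    have nzh: "(of_nat h :: 'p ratfun) \<noteq> 0" using ofnz assms(2,3) unfolding P_def by simp
    have cq: "c ^ q \<noteq> 0" using cnz by simp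
    have "A * c ^ q = c ^ q / (of_nat k * (prodP k (of_nat h * \<alpha>) * prodP h \<alpha> ^ k))"
      unfolding A_def d_def by (simp add: power_one_over field_simps)
    also have "\<dots> = c ^ q / (of_nat k * (c ^ q * prodP (\<sigma> k) \<alpha>))" unfolding MI ..
    also have "\<dots> = of_nat h / (of_nat (\<sigma> k) * prodP (\<sigma> k) \<alpha>)"
      unfolding ofr using nz3 nzk nzh cq by (simp add: field_simps)
    finally have Ac: "A * c ^ q = of_nat h / (of_nat (\<sigma> k) * prodP (\<sigma> k) \<alpha>)" .
    show ?thesis using term_dvd[of P c A "\<sigma> k" q] unfolding M_def Ac[symmetric] hk[symmetric] A_def .
  qed
  have "M dvd pcompose (G_poly (of_nat h * \<alpha>)) (monom d h) - smult (of_nat h) (G_poly \<alpha>)"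
  proof -
    have "pcompose (G_poly (of_nat h * \<alpha>)) (monom d h) - smult (of_nat h) (G_poly \<alpha>)
      = - (\<Sum>k\<in>{1..<P}. monom (1 / (of_nat k * prodP k (of_nat h * \<alpha>)) * d ^ k) (h * k)
        - monom (of_nat h / (of_nat (\<sigma> k) * prodP (\<sigma> k) \<alpha>)) (\<sigma> k))"
      unfolding L R by (simp add: sum_subtractf)
    also have "M dvd \<dots>" by (rule dvd_minus_iff[THEN iffD2], rule dvd_sum, rule key)
    finally show ?thesis .
  qed
  then have "pcompose (G_poly (of_nat h * \<alpha>)) (monom d h) mod M = smult (of_nat h) (G_poly \<alpha>) mod M"
    by (simp add: mod_eq_dvd_iff)
  moreover have "laguerre (\<alpha> ^ P) (\<alpha> ^ P - \<alpha>) = c" unfolding c_def P_def by (rule laguerre_lgen)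
  moreover have "(\<Prod>s=1..h-1. b_rs 1 s \<alpha>) = prodP h \<alpha>" by (rule prod_brs)
  ultimately show ?thesis unfolding Let_def M_def d_def P_def \<alpha>_def by simp
qed

end
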